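(* Let $M$ be a matroid of rank $r$ on $E=\{0,\dots,n\}$. Then \[ \int_{X_E} c_{r-1}(\mathcal S_M^\vee)\,c_{|E|-r}(\mathcal Q_M) = \beta(M) \quad\text{and}\quad \int_{X_E} c_{r}(\mathcal S_M^\vee)\,c_{|E|-r-1}(\mathcal Q_M) = \beta(M^\perp), \] with the convention $c_{-1}=0$.
   Context: $X_E$ is the $n$-dimensional permutohedral variety (toric variety of the fan in $\mathbb R^E/\mathbb R\mathbf 1$ with cones $\operatorname{Cone}(\overline{\mathbf e}_{S_1},\dots,\overline{\mathbf e}_{S_k})$ for chains $\emptyset\subsetneq S_1\subsetneq\cdots\subsetneq S_k\subsetneq E$), with $T=(\mathbb C^* )^E$-fixed points $p_\sigma$ indexed by permutations $\sigma$ of $E$; $K_T^0(X_E)$ embeds into $\prod_\sigma\mathbb Z[T_0^{\pm1},\dots,T_n^{\pm1}]$ by restriction. For a matroid $M$ and permutation $\sigma$, $B_\sigma(M)$ is the lexicographically first basis for the order $\sigma(0)\prec\cdots\prec\sigma(n)$, and $[\mathcal S_M],[\mathcal Q_M]\in K_T^0(X_E)$ are the classes with restrictions $\sum_{i\in B_\sigma(M)}T_i^{-1}$ and $\sum_{i\notin B_\sigma(M)}T_i^{-1}$ at $p_\sigma$; $\vee$ denotes the dual and $c_k$ the non-equivariant Chern class. $\beta(M)$ and $\beta(M^\perp)$ are the coefficients of $x$ and of $y$, respectively, in the Tutte polynomial $T_M(x,y)$; $M^\perp$ is the dual matroid. *)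

theory Defs
  imports "HOL-Combinatorics.Permutations" "HOL-Computational_Algebra.Polynomial"
          "HOL-Library.Multiset" Complex_Main
begin

definition matroid :: "'a set \<Rightarrow> 'a set set \<Rightarrow> bool" where
  "matroid E \<B> \<longleftrightarrow> finite E \<and> \<B> \<noteq> {} \<and> (\<forall>B\<in>\<B>. B \<subseteq> E) \<and>
     (\<forall>B1\<in>\<B>. \<forall>B2\<in>\<B>. \<forall>x\<in>B1 - B2. \<exists>y\<in>B2 - B1. insert y (B1 - {x}) \<in> \<B>)"

definition mrank :: "'a set set \<Rightarrow> 'a set \<Rightarrow> nat" where
  "mrank \<B> A = Max ((\<lambda>B. card (B \<inter> A)) ` \<B>)"

definition dual_matroid :: "'a set \<Rightarrow> 'a set set \<Rightarrow> 'a set set" where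
  "dual_matroid E \<B> = (\<lambda>B. E - B) ` \<B>"

text \<open>Tutte polynomial T_M(x,y) as a polynomial in x whose coefficients are
  polynomials in y:  sum over A of (x-1)^(r - rk A) (y-1)^(|A| - rk A).\<close>
definition tutte :: "'a set \<Rightarrow> 'a set set \<Rightarrow> int poly poly" where
  "tutte E \<B> = (\<Sum>A\<in>Pow E. [:-1, 1:] ^ (mrank \<B> E - mrank \<B> A)
                          * [: [:-1, 1:] ^ (card A - mrank \<B> A) :])"

definition beta :: "'a set \<Rightarrow> 'a set set \<Rightarrow> int" where
  "beta E \<B> = coeff (coeff (tutte E \<B>) 1) 0"

definition pos_list :: "(nat \<Rightarrow> nat) \<Rightarrow> nat set \<Rightarrow> nat list" where
  "pos_list \<sigma> B = sorted_list_of_set (inv \<sigma> ` B)"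

definition lex_first_basis :: "nat set set \<Rightarrow> (nat \<Rightarrow> nat) \<Rightarrow> nat set" where
  "lex_first_basis \<B> \<sigma> = (THE B. B \<in> \<B> \<and>
      (\<forall>B'\<in>\<B>. B' \<noteq> B \<longrightarrow> (pos_list \<sigma> B, pos_list \<sigma> B') \<in> lexord {(a, b). a < b}))"

text \<open>A character of T = (C^*)^E is a Laurent monomial T^a, encoded by its exponent
  vector a.  The restriction of an equivariant vector bundle class to p_sigma is a
  multiset of characters; a class is given by its restrictions at all p_sigma.\<close>
type_synonym character = "nat \<Rightarrow> int"
type_synonym Kclass = "(nat \<Rightarrow> nat) \<Rightarrow> character multiset"

definition char_inv :: "nat \<Rightarrow> character" where
  "char_inv i = (\<lambda>j. if j = i then -1 else 0)"

definition class_S :: "nat \<Rightarrow> nat set set \<Rightarrow> Kclass" where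
  "class_S n \<B> = (\<lambda>\<sigma>. image_mset char_inv (mset_set (lex_first_basis \<B> \<sigma>)))"

definition class_Q :: "nat \<Rightarrow> nat set set \<Rightarrow> Kclass" where
  "class_Q n \<B> = (\<lambda>\<sigma>. image_mset char_inv (mset_set ({0..n} - lex_first_basis \<B> \<sigma>)))"

definition Kdual :: "Kclass \<Rightarrow> Kclass" where
  "Kdual F = (\<lambda>\<sigma>. image_mset (\<lambda>a j. - a j) (F \<sigma>))"

text \<open>Equivariant cohomology classes are given by their restrictions at p_sigma,
  polynomial functions of the equivariant parameters t = (t_0,...,t_n).  The
  character T^a has equivariant first Chern class sum_j a_j t_j.\<close>
definition char_weight :: "nat \<Rightarrow> character \<Rightarrow> (nat \<Rightarrow> real) \<Rightarrow> real" where
  "char_weight n a t = (\<Sum>j\<in>{0..n}. real_of_int (a j) * t j)"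

definition chern :: "nat \<Rightarrow> int \<Rightarrow> Kclass \<Rightarrow> (nat \<Rightarrow> nat) \<Rightarrow> (nat \<Rightarrow> real) \<Rightarrow> real" where
  "chern n k F \<sigma> t = (if k < 0 then 0
     else coeff (\<Prod>a\<in>#F \<sigma>. [:1, char_weight n a t:]) (nat k))"

text \<open>Atiyah--Bott localization on X_E: the tangent weights at p_sigma are
  t_sigma(i) - t_sigma(i+1), i < n.\<close>
definition loc_integral :: "nat \<Rightarrow> ((nat \<Rightarrow> nat) \<Rightarrow> (nat \<Rightarrow> real) \<Rightarrow> real) \<Rightarrow> (nat \<Rightarrow> real) \<Rightarrow> real" where
  "loc_integral n f t = (\<Sum>\<sigma>\<in>{\<sigma>. \<sigma> permutes {0..n}}.
       f \<sigma> t / (\<Prod>i<n. t (\<sigma> i) - t (\<sigma> (Suc i))))"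

text \<open>"integral over X_E of the (degree n) class f equals v": the localization
  sum is identically v at all generic parameters.  For a class of degree n this is
  the non-equivariant degree.\<close>
definition XE_integral_eq :: "nat \<Rightarrow> ((nat \<Rightarrow> nat) \<Rightarrow> (nat \<Rightarrow> real) \<Rightarrow> real) \<Rightarrow> real \<Rightarrow> bool" where
  "XE_integral_eq n f v \<longleftrightarrow> (\<forall>t. inj_on t {0..n} \<longrightarrow> loc_integral n f t = v)"

end

theory Submission
  imports Defs "HOL-Combinatorics.Multiset_Permutations"
begin



lemma matroid_finite_basis: "matroid E Bs \<Longrightarrow> B \<in> Bs \<Longrightarrow> finite B"
  unfolding matroid_def by (meson finite_subset)

lemma matroid_card_eq_aux:
  assumes M: "matroid E Bs"
  shows "\<forall>B1 B2. B1 \<in> Bs \<longrightarrow> B2 \<in> Bs \<longrightarrow> card (B1 - B2) = d \<longrightarrow> card B1 = card B2"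
proof (induction d)
  case 0
  show ?case
  proof (intro allI impI)
    fix B1 B2 assume h: "B1 \<in> Bs" "B2 \<in> Bs" "card (B1 - B2) = 0"
    have f1: "finite B1" "finite B2" using h M matroid_finite_basis by blast+
    have "B1 \<subseteq> B2" using h f1 by auto
    moreover have "B2 \<subseteq> B1"
    proof
      fix x assume "x \<in> B2"
      show "x \<in> B1"
      proof (rule ccontr)
        assume "x \<notin> B1"
        then obtain y where "y \<in> B1 - B2" using M h \<open>x \<in> B2\<close> unfolding matroid_def by blast
        with \<open>B1 \<subseteq> B2\<close> show False by blast
      qed
    qed
    ultimately show "card B1 = card B2" by simp
  qed
next
  case (Suc d)
  show ?case
  proof (intro allI impI)
    fix B1 B2 assume h: "B1 \<in> Bs" "B2 \<in> Bs" "card (B1 - B2) = Suc d"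
    have f1: "finite B1" "finite B2" using h M matroid_finite_basis by blast+
    obtain x where x: "x \<in> B1 - B2" using h(3) by (metis card.empty ex_in_conv nat.distinct(1))
    then obtain y where y: "y \<in> B2 - B1" "insert y (B1 - {x}) \<in> Bs" using M h unfolding matroid_def by blast
    have "insert y (B1 - {x}) - B2 = (B1 - B2) - {x}" using x y by auto
    hence "card (insert y (B1 - {x}) - B2) = d" using h(3) x f1 by simp
    hence "card (insert y (B1 - {x})) = card B2" using Suc y h by blast
    moreover have "card (insert y (B1 - {x})) = card B1" using x y f1
    proof -
      have "card B1 > 0" using x f1 card_gt_0_iff by blast
      thus ?thesis using x y f1 by (simp add: card_Diff_singleton)
    qed
    ultimately show "card B1 = card B2" by simp
  qed
qed

lemma matroid_card_eq: "matroid E Bs \<Longrightarrow> B1 \<in> Bs \<Longrightarrow> B2 \<in> Bs \<Longrightarrow> card B1 = card B2"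
  using matroid_card_eq_aux by blast




lemma lex_sorted_aux:
  "\<forall>X Y. finite X \<longrightarrow> finite Y \<longrightarrow> card X = c \<longrightarrow> card Y = c \<longrightarrow> m \<in> X \<longrightarrow> m \<notin> Y
    \<longrightarrow> (\<forall>z<m. z \<in> X \<longleftrightarrow> z \<in> Y)
    \<longrightarrow> (sorted_list_of_set X, sorted_list_of_set Y) \<in> lexord {(a,b). a < (b::nat)}"
proof (induction c)
  case 0
  then show ?case by auto
next
  case (Suc c)
  show ?case
  proof (intro allI impI)
    fix X Y :: "nat set"
    assume h: "finite X" "finite Y" "card X = Suc c" "card Y = Suc c" "m \<in> X" "m \<notin> Y"
      "\<forall>z<m. z \<in> X \<longleftrightarrow> z \<in> Y"
    have ne: "X \<noteq> {}" "Y \<noteq> {}" using h by auto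
    define a where "a = Min X"
    define b where "b = Min Y"
    have aX: "a \<in> X" "\<forall>x\<in>X. a \<le> x" using h ne a_def by auto
    have bY: "b \<in> Y" "\<forall>x\<in>Y. b \<le> x" using h ne b_def by auto
    have sX: "sorted_list_of_set X = a # sorted_list_of_set (X - {a})"
      using sorted_list_of_set_nonempty[OF h(1) ne(1)] a_def by simp
    have sY: "sorted_list_of_set Y = b # sorted_list_of_set (Y - {b})"
      using sorted_list_of_set_nonempty[OF h(2) ne(2)] b_def by simp
    show "(sorted_list_of_set X, sorted_list_of_set Y) \<in> lexord {(a,b). a < (b::nat)}"
    proof (cases "a = b")
      case True
      have "a \<noteq> m" using True bY h by auto
      have "(sorted_list_of_set (X - {a}), sorted_list_of_set (Y - {a})) \<in> lexord {(a,b). a < (b::nat)}"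
        using Suc.IH h aX bY True \<open>a \<noteq> m\<close> by auto
      then show ?thesis using sX sY True by simp
    next
      case False
      have "a \<le> m" using aX h by auto
      have "a = m"
      proof (rule ccontr)
        assume "a \<noteq> m"
        hence "a < m" using \<open>a \<le> m\<close> by simp
        hence "a \<in> Y" using h aX by auto
        hence "b \<le> a" using bY by auto
        hence "b < m" using \<open>a < m\<close> by simp
        hence "b \<in> X" using h bY by auto
        hence "a \<le> b" using aX by auto
        thus False using \<open>b \<le> a\<close> False by simp
      qed
      have "m < b"
      proof (rule ccontr)
        assume "\<not> m < b"
        hence "b \<le> m" by simp
        moreover have "b \<noteq> m" using bY h by auto
        ultimately have "b < m" by simp
        hence "b \<in> X" using h bY by auto
        hence "a \<le> b" using aX by auto
        thus False using \<open>b < m\<close> \<open>a = m\<close> by simp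
      qed
      then show ?thesis using sX sY \<open>a = m\<close> by simp
    qed
  qed
qed

lemma lex_sorted:
  fixes X Y :: "nat set"
  assumes "finite X" "finite Y" "card X = card Y" "m \<in> X" "m \<notin> Y" "\<And>z. z < m \<Longrightarrow> z \<in> X \<longleftrightarrow> z \<in> Y"
  shows "(sorted_list_of_set X, sorted_list_of_set Y) \<in> lexord {(a,b). a < (b::nat)}"
  using lex_sorted_aux[of "card X" m] assms by auto

lemma lexord_nat_min_exists:
  fixes S :: "nat list set"
  assumes "finite S" "S \<noteq> {}"
  shows "\<exists>l\<in>S. \<forall>l'\<in>S. l' \<noteq> l \<longrightarrow> (l, l') \<in> lexord {(a,b). a < b}"
  using assms
proof (induction S rule: finite_ne_induct)
  case (singleton x)
  then show ?case by auto
next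
  case (insert x F)
  then obtain l where l: "l \<in> F" "\<forall>l'\<in>F. l' \<noteq> l \<longrightarrow> (l, l') \<in> lexord {(a,b). a < (b::nat)}" by blast
  have tr: "trans {(a,b). a < (b::nat)}" by (auto simp: trans_def)
  have lin: "(x, l) \<in> lexord {(a,b). a < (b::nat)} \<or> x = l \<or> (l, x) \<in> lexord {(a,b). a < (b::nat)}"
    by (rule lexord_linear) auto
  show ?case
  proof (cases "(x, l) \<in> lexord {(a,b). a < (b::nat)}")
    case True
    have "\<forall>l'\<in>insert x F. l' \<noteq> x \<longrightarrow> (x, l') \<in> lexord {(a,b). a < (b::nat)}"
      using True l lexord_trans[OF True _ tr] by auto
    then show ?thesis by blast
  next
    case False
    then have "x = l \<or> (l, x) \<in> lexord {(a,b). a < (b::nat)}" using lin by blast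
    then have "\<forall>l'\<in>insert x F. l' \<noteq> l \<longrightarrow> (l, l') \<in> lexord {(a,b). a < (b::nat)}"
      using l by auto
    then show ?thesis using l by blast
  qed
qed

lemma lexord_nat_asym:
  "(l1, l2) \<in> lexord {(a,b). a < (b::nat)} \<Longrightarrow> (l2, l1) \<notin> lexord {(a,b). a < (b::nat)}"
  by (rule lexord_asymmetric) (auto simp: asym_iff)

lemma pos_list_inj:
  assumes "inj (inv \<sigma>)" "finite A" "finite B" "pos_list \<sigma> A = pos_list \<sigma> B"
  shows "A = B"
proof -
  have "inv \<sigma> ` A = inv \<sigma> ` B"
    using assms sorted_list_of_set_inject unfolding pos_list_def by (metis finite_imageI)
  thus ?thesis using assms(1) by (simp add: inj_image_eq_iff)
qed

lemma lex_first_basis_props: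
  assumes M: "matroid E Bs" and inj: "inj (inv \<sigma>)"
  shows "lex_first_basis Bs \<sigma> \<in> Bs"
    "\<forall>B'\<in>Bs. B' \<noteq> lex_first_basis Bs \<sigma> \<longrightarrow>
        (pos_list \<sigma> (lex_first_basis Bs \<sigma>), pos_list \<sigma> B') \<in> lexord {(a, b). a < b}"
proof -
  have finBs: "finite Bs" using M unfolding matroid_def
    by (meson Pow_iff finite_Pow_iff rev_finite_subset subsetI)
  obtain l where l: "l \<in> pos_list \<sigma> ` Bs"
    "\<forall>l'\<in>pos_list \<sigma> ` Bs. l' \<noteq> l \<longrightarrow> (l, l') \<in> lexord {(a,b). a < b}"
    using lexord_nat_min_exists[of "pos_list \<sigma> ` Bs"] finBs M unfolding matroid_def by auto
  then obtain B where B: "B \<in> Bs" "l = pos_list \<sigma> B" by blast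
  have P: "B \<in> Bs \<and> (\<forall>B'\<in>Bs. B' \<noteq> B \<longrightarrow> (pos_list \<sigma> B, pos_list \<sigma> B') \<in> lexord {(a, b). a < b})"
  proof (intro conjI ballI impI)
    show "B \<in> Bs" by fact
    fix B' assume "B' \<in> Bs" "B' \<noteq> B"
    hence "pos_list \<sigma> B' \<noteq> pos_list \<sigma> B"
      using pos_list_inj[OF inj] matroid_finite_basis[OF M] B by metis
    thus "(pos_list \<sigma> B, pos_list \<sigma> B') \<in> lexord {(a, b). a < b}" using l B \<open>B' \<in> Bs\<close> by auto
  qed
  have "lex_first_basis Bs \<sigma> = B"
    unfolding lex_first_basis_def
  proof (rule the_equality)
    show "B \<in> Bs \<and> (\<forall>B'\<in>Bs. B' \<noteq> B \<longrightarrow> (pos_list \<sigma> B, pos_list \<sigma> B') \<in> lexord {(a, b). a < b})" by fact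
    fix C assume C: "C \<in> Bs \<and> (\<forall>B'\<in>Bs. B' \<noteq> C \<longrightarrow> (pos_list \<sigma> C, pos_list \<sigma> B') \<in> lexord {(a, b). a < b})"
    show "C = B"
    proof (rule ccontr)
      assume "C \<noteq> B"
      hence "(pos_list \<sigma> C, pos_list \<sigma> B) \<in> lexord {(a, b). a < b}"
        "(pos_list \<sigma> B, pos_list \<sigma> C) \<in> lexord {(a, b). a < b}" using C P by auto
      thus False using lexord_nat_asym by blast
    qed
  qed
  thus "lex_first_basis Bs \<sigma> \<in> Bs"
    "\<forall>B'\<in>Bs. B' \<noteq> lex_first_basis Bs \<sigma> \<longrightarrow>
        (pos_list \<sigma> (lex_first_basis Bs \<sigma>), pos_list \<sigma> B') \<in> lexord {(a, b). a < b}"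
    using P by auto
qed




lemma greedy_aux:
  fixes k :: nat
  assumes M: "matroid E Bs" and inj: "inj (inv \<sigma>)"
  defines "B0 \<equiv> lex_first_basis Bs \<sigma>"
  defines "P \<equiv> {e. inv \<sigma> e < k}"
  shows "\<forall>B'. B' \<in> Bs \<longrightarrow> card (B' - B0) = d \<longrightarrow> card (B' \<inter> P) \<le> card (B0 \<inter> P)"
proof (induction d rule: less_induct)
  case (less d)
  have B0: "B0 \<in> Bs" "\<forall>B'\<in>Bs. B' \<noteq> B0 \<longrightarrow> (pos_list \<sigma> B0, pos_list \<sigma> B') \<in> lexord {(a, b). a < b}"
    using lex_first_basis_props[OF M inj] B0_def by auto
  have finB0: "finite B0" using B0 M matroid_finite_basis by blast
  show ?case
  proof (intro allI impI)
    fix B' assume B': "B' \<in> Bs" "card (B' - B0) = d"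
    have finB': "finite B'" using B' M matroid_finite_basis by blast
    show "card (B' \<inter> P) \<le> card (B0 \<inter> P)"
    proof (rule ccontr)
      assume viol: "\<not> card (B' \<inter> P) \<le> card (B0 \<inter> P)"
      show False
      proof (cases "\<exists>x\<in>B' - B0. x \<notin> P")
        case True
        then obtain x where x: "x \<in> B' - B0" "x \<notin> P" by blast
        then obtain y where y: "y \<in> B0 - B'" "insert y (B' - {x}) \<in> Bs"
          using M B' B0 unfolding matroid_def by blast
        define B'' where "B'' = insert y (B' - {x})"
        have "B'' - B0 = (B' - B0) - {x}" using x y B''_def by auto
        moreover have "card ((B' - B0) - {x}) < card (B' - B0)"
          using x finB' by (intro card_Diff1_less) auto
        ultimately have "card (B'' - B0) < d" using B' by simp
        hence le: "card (B'' \<inter> P) \<le> card (B0 \<inter> P)" using less y B''_def by blast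
        have "B' \<inter> P \<subseteq> B'' \<inter> P" using x B''_def by auto
        hence "card (B' \<inter> P) \<le> card (B'' \<inter> P)" using finB' B''_def by (intro card_mono) auto
        then show False using le viol by simp
      next
        case False
        hence sub: "B' - B0 \<subseteq> P" by blast
        have ceq: "card B' = card B0" using matroid_card_eq[OF M B'(1) B0(1)] .
        have c1: "card B' = card (B' \<inter> B0) + card (B' - B0)"
          using finB' by (metis Diff_Diff_Int card_Diff_subset_Int inf_le1 card_Int_Diff finB'  )
        have c2: "card B0 = card (B' \<inter> B0) + card (B0 - B')"
          using finB0 by (metis Int_commute card_Int_Diff)
        have c3: "card (B' \<inter> P) = card (B' \<inter> B0 \<inter> P) + card (B' - B0)"
        proof -
          have "B' \<inter> P = (B' \<inter> B0 \<inter> P) \<union> (B' - B0)" using sub by auto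
          moreover have "(B' \<inter> B0 \<inter> P) \<inter> (B' - B0) = {}" by auto
          ultimately show ?thesis using finB' by (metis card_Un_disjoint finite_Diff finite_Int)
        qed
        have c4: "card (B0 \<inter> P) = card (B' \<inter> B0 \<inter> P) + card ((B0 - B') \<inter> P)"
        proof -
          have "B0 \<inter> P = (B' \<inter> B0 \<inter> P) \<union> ((B0 - B') \<inter> P)" by auto
          moreover have "(B' \<inter> B0 \<inter> P) \<inter> ((B0 - B') \<inter> P) = {}" by auto
          ultimately show ?thesis using finB0 by (metis card_Un_disjoint finite_Diff finite_Int)
        qed
        have "card ((B0 - B') \<inter> P) < card (B0 - B')" using c1 c2 c3 c4 ceq viol by linarith
        then obtain x where x: "x \<in> B0 - B'" "x \<notin> P"
          by (metis Int_absorb2 less_irrefl subsetI)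
        then obtain y where y: "y \<in> B' - B0" "insert y (B0 - {x}) \<in> Bs"
          using M B' B0 unfolding matroid_def by blast
        define B'' where "B'' = insert y (B0 - {x})"
        have yP: "y \<in> P" using y sub by auto
        have "B'' \<noteq> B0" using y B''_def by auto
        hence lo: "(pos_list \<sigma> B0, pos_list \<sigma> B'') \<in> lexord {(a, b). a < b}" using B0 y B''_def by auto
        have pyx: "inv \<sigma> y < inv \<sigma> x" using x yP P_def by auto
        have cB'': "card B'' = card B0" using matroid_card_eq[OF M _ B0(1)] y B''_def by blast
        have "(sorted_list_of_set (inv \<sigma> ` B''), sorted_list_of_set (inv \<sigma> ` B0)) \<in> lexord {(a,b). a < (b::nat)}"
        proof (rule lex_sorted)
          show "finite (inv \<sigma> ` B'')" "finite (inv \<sigma> ` B0)" using finB0 B''_def by auto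
          show "card (inv \<sigma> ` B'') = card (inv \<sigma> ` B0)"
            using cB'' inj by (simp add: card_image inj_on_subset)
          show "inv \<sigma> y \<in> inv \<sigma> ` B''" using B''_def by auto
          show "inv \<sigma> y \<notin> inv \<sigma> ` B0" using y inj by (auto dest: injD)
          fix z assume "z < inv \<sigma> y"
          hence "z \<noteq> inv \<sigma> x" "z \<noteq> inv \<sigma> y" using pyx by auto
          thus "z \<in> inv \<sigma> ` B'' \<longleftrightarrow> z \<in> inv \<sigma> ` B0" using B''_def x by auto
        qed
        hence "(pos_list \<sigma> B'', pos_list \<sigma> B0) \<in> lexord {(a, b). a < b}" by (simp add: pos_list_def)
        then show False using lo lexord_nat_asym by blast
      qed
    qed
  qed
qed

lemma greedy:
  assumes M: "matroid E Bs" and inj: "inj (inv \<sigma>)"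
  shows "mrank Bs {e. inv \<sigma> e < k} = card (lex_first_basis Bs \<sigma> \<inter> {e. inv \<sigma> e < k})"
proof -
  have finBs: "finite Bs" using M unfolding matroid_def
    by (meson Pow_iff finite_Pow_iff rev_finite_subset subsetI)
  have B0: "lex_first_basis Bs \<sigma> \<in> Bs" using lex_first_basis_props[OF M inj] by auto
  show ?thesis unfolding mrank_def
    by (rule Max_eqI) (use finBs B0 greedy_aux[OF M inj] in auto)
qed




lemma sum_Pow_insert:
  assumes "finite F" "x \<notin> F"
  shows "(\<Sum>A\<in>Pow (insert x F). g A) = (\<Sum>A\<in>Pow F. g A) + (\<Sum>A\<in>Pow F. g (insert x A))"
proof -
  have "Pow (insert x F) = Pow F \<union> insert x ` Pow F" by (rule Pow_insert)
  moreover have "Pow F \<inter> insert x ` Pow F = {}" using assms by auto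
  moreover have "inj_on (insert x) (Pow F)" unfolding inj_on_def using assms by (metis PowD in_mono insert_ident)
  ultimately show ?thesis using assms by (simp add: sum.union_disjoint sum.reindex)
qed

lemma sum_Pow_sign:
  assumes "finite S"
  shows "(\<Sum>A\<in>Pow S. (-1::int) ^ card A) = (if S = {} then 1 else 0)"
  using assms
proof (induction S rule: finite_induct)
  case empty
  then show ?case by simp
next
  case (insert x F)
  have "(\<Sum>A\<in>Pow (insert x F). (-1::int) ^ card A) =
        (\<Sum>A\<in>Pow F. (-1::int) ^ card A) + (\<Sum>A\<in>Pow F. (-1::int) ^ card (insert x A))"
    by (rule sum_Pow_insert) (use insert in auto)
  also have "(\<Sum>A\<in>Pow F. (-1::int) ^ card (insert x A)) = (\<Sum>A\<in>Pow F. - ((-1::int) ^ card A))"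
  proof (rule sum.cong)
    fix A assume "A \<in> Pow F"
    hence "card (insert x A) = Suc (card A)" using insert by (meson PowD card_insert_disjoint finite_subset subset_eq)
    thus "(-1::int) ^ card (insert x A) = - ((-1) ^ card A)" by simp
  qed simp
  finally show ?case by (simp add: sum_negf)
qed

lemma sum_Pow_sign_card:
  assumes "finite F" "x \<notin> F"
  shows "(\<Sum>A\<in>Pow (insert x F). (-1::int) ^ card A * int (card A)) = - (if F = {} then 1 else 0)"
proof -
  have "(\<Sum>A\<in>Pow (insert x F). (-1::int) ^ card A * int (card A)) =
        (\<Sum>A\<in>Pow F. (-1::int) ^ card A * int (card A)) + (\<Sum>A\<in>Pow F. (-1::int) ^ card (insert x A) * int (card (insert x A)))"
    by (rule sum_Pow_insert) (use assms in auto)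
  also have "(\<Sum>A\<in>Pow F. (-1::int) ^ card (insert x A) * int (card (insert x A))) =
     (\<Sum>A\<in>Pow F. - ((-1::int) ^ card A * int (card A)) - (-1::int) ^ card A)"
  proof (rule sum.cong)
    fix A assume "A \<in> Pow F"
    hence "card (insert x A) = Suc (card A)" using assms by (meson PowD card_insert_disjoint finite_subset subset_eq)
    thus "(-1::int) ^ card (insert x A) * int (card (insert x A)) = - ((-1::int) ^ card A * int (card A)) - (-1::int) ^ card A"
      by (simp add: algebra_simps)
  qed simp
  finally show ?thesis using sum_Pow_sign[OF assms(1)] by (simp add: sum_subtractf sum_negf)
qed

lemma mrank_le_card:
  assumes "finite Bs" "Bs \<noteq> {}" "finite A"
  shows "mrank Bs A \<le> card A"
  unfolding mrank_def using assms by (auto intro: card_mono)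

lemma mrank_mono:
  assumes "finite Bs" "Bs \<noteq> {}" "finite E" "A \<subseteq> E"
  shows "mrank Bs A \<le> mrank Bs E"
proof -
  have "\<forall>B\<in>Bs. card (B \<inter> A) \<le> card (B \<inter> E)" using assms by (auto intro: card_mono)
  thus ?thesis unfolding mrank_def using assms
    by (simp add: Max_le_iff) (meson Max_ge finite_imageI imageI order_trans)
qed

lemma coeff_lin_pow1: "coeff ([:c, 1:] ^ a) 1 = of_nat a * c ^ (a - 1)"
proof (induction a)
  case 0
  then show ?case by simp
next
  case (Suc a)
  have "coeff ([:c, 1:] ^ Suc a) 1 = c * coeff ([:c, 1:] ^ a) 1 + coeff ([:c, 1:] ^ a) 0"
    by (simp add: coeff_pCons_Suc)
  also have "\<dots> = c * (of_nat a * c ^ (a - 1)) + c ^ a" using Suc by (simp add: coeff_0_power)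
  also have "\<dots> = of_nat (Suc a) * c ^ a" by (cases a) (simp_all add: algebra_simps)
  finally show ?case by simp
qed

lemma beta_crapo:
  assumes fE: "finite E" "E \<noteq> {}" and fB: "finite Bs" "Bs \<noteq> {}" and sub: "\<forall>B\<in>Bs. B \<subseteq> E"
  shows "beta E Bs = (-1) ^ mrank Bs E * (\<Sum>A\<in>Pow E. (-1) ^ card A * int (mrank Bs A))"
proof -
  define r where "r = mrank Bs E"
  have termA: "coeff (coeff ([:-1, 1:] ^ (r - mrank Bs A) * [: [:-1, 1:] ^ (card A - mrank Bs A) :]) 1) 0
     = (-1) ^ (r + 1) * ((-1) ^ card A * (int r - int (mrank Bs A)))" if "A \<in> Pow E" for A
  proof -
    have fA: "finite A" using that fE finite_subset by auto
    have le1: "mrank Bs A \<le> r" using mrank_mono[OF fB fE(1)] that r_def by auto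
    have le2: "mrank Bs A \<le> card A" using mrank_le_card[OF fB fA] .
    have h: "coeff (([:-1, 1:] :: int poly poly) ^ (r - mrank Bs A)) 1 = of_nat (r - mrank Bs A) * (-1) ^ (r - mrank Bs A - 1)"
      by (rule coeff_lin_pow1)
    have "coeff (coeff ([:-1, 1:] ^ (r - mrank Bs A) * [: [:-1, 1:] ^ (card A - mrank Bs A) :]) 1) 0
       = coeff ([:-1, 1:] ^ (card A - mrank Bs A) * coeff (([:-1, 1:] :: int poly poly) ^ (r - mrank Bs A)) 1) 0"
      by simp
    also have "\<dots> = coeff ([:-1, 1:] ^ (card A - mrank Bs A) * (of_nat (r - mrank Bs A) * (-1) ^ (r - mrank Bs A - 1))) 0"
      by (simp only: h)
    also have "\<dots> = int (r - mrank Bs A) * (-1) ^ (r - mrank Bs A - 1) * (-1) ^ (card A - mrank Bs A)"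
      by (simp add: coeff_mult_0 coeff_0_power of_nat_poly)
    also have "\<dots> = (-1) ^ (r + 1) * ((-1) ^ card A * (int r - int (mrank Bs A)))"
    proof (cases "mrank Bs A = r")
      case True
      then show ?thesis by simp
    next
      case False
      hence "(-1::int) ^ (r - mrank Bs A - 1) * (-1) ^ (card A - mrank Bs A) = (-1) ^ (r + 1) * (-1) ^ card A"
        using le1 le2 unfolding minus_one_power_iff by (auto; presburger)
      then show ?thesis using le1 by (simp add: of_nat_diff algebra_simps)
    qed
    finally show ?thesis .
  qed
  have "beta E Bs = (\<Sum>A\<in>Pow E. (-1) ^ (r + 1) * ((-1) ^ card A * (int r - int (mrank Bs A))))"
    unfolding beta_def tutte_def r_def[symmetric] coeff_sum using termA by simp
  also have "\<dots> = (-1) ^ (r + 1) * (\<Sum>A\<in>Pow E. (-1) ^ card A * (int r - int (mrank Bs A)))"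
    by (simp add: sum_distrib_left)
  also have "(\<Sum>A\<in>Pow E. (-1) ^ card A * (int r - int (mrank Bs A))) =
     int r * (\<Sum>A\<in>Pow E. (-1) ^ card A) - (\<Sum>A\<in>Pow E. (-1) ^ card A * int (mrank Bs A))"
    by (simp add: right_diff_distrib sum_subtractf sum_distrib_left mult.commute)
  also have "int r * (\<Sum>A\<in>Pow E. (-1::int) ^ card A) = 0"
    using sum_Pow_sign[OF fE(1)] fE by simp
  also have "(-1) ^ (r + 1) * (0 - (\<Sum>A\<in>Pow E. (-1) ^ card A * int (mrank Bs A))) =
     (-1) ^ r * (\<Sum>A\<in>Pow E. (-1::int) ^ card A * int (mrank Bs A))"
    by simp
  finally show ?thesis using r_def by simp
qed




lemma matroid_finite_Bs: "matroid E Bs \<Longrightarrow> finite Bs"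
  unfolding matroid_def by (meson Pow_iff finite_Pow_iff rev_finite_subset subsetI)

lemma basis_card_rank:
  assumes M: "matroid E Bs" and B: "B \<in> Bs"
  shows "card B = mrank Bs E"
proof -
  have "\<forall>B'\<in>Bs. card (B' \<inter> E) = card B"
    using M B matroid_card_eq unfolding matroid_def by (metis inf.absorb1)
  hence "(\<lambda>B'. card (B' \<inter> E)) ` Bs = {card B}" using B by auto
  thus ?thesis unfolding mrank_def by simp
qed

lemma mrank_dual:
  assumes M: "matroid E Bs" and A: "A \<subseteq> E"
  shows "int (mrank (dual_matroid E Bs) A) = int (card A) - int (mrank Bs E) + int (mrank Bs (E - A))"
proof -
  define r where "r = mrank Bs E"
  have fE: "finite E" and ne: "Bs \<noteq> {}" and sub: "\<forall>B\<in>Bs. B \<subseteq> E" using M unfolding matroid_def by auto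
  have fBs: "finite Bs" using matroid_finite_Bs[OF M] .
  have fA: "finite A" using fE A finite_subset by auto
  define h where "h = (\<lambda>x. card A + x - r)"
  have key: "card ((E - B) \<inter> A) = h (card (B \<inter> (E - A)))" if "B \<in> Bs" for B
  proof -
    have cB: "card B = r" using basis_card_rank[OF M that] r_def by simp
    have fB: "finite B" using that M matroid_finite_basis by blast
    have "(E - B) \<inter> A = A - (B \<inter> A)" using A by auto
    hence "card ((E - B) \<inter> A) = card A - card (B \<inter> A)" using fA by (simp add: card_Diff_subset)
    moreover have "card (B \<inter> A) + card (B \<inter> (E - A)) = card B"
    proof -
      have "B = (B \<inter> A) \<union> (B \<inter> (E - A))" using sub that A by auto
      moreover have "(B \<inter> A) \<inter> (B \<inter> (E - A)) = {}" by auto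
      ultimately show ?thesis using fB by (metis card_Un_disjoint finite_Int)
    qed
    moreover have "card (B \<inter> A) \<le> card A" using fA by (simp add: card_mono)
    ultimately show ?thesis unfolding h_def using cB by linarith
  qed
  have "mrank (dual_matroid E Bs) A = Max ((\<lambda>B. card ((E - B) \<inter> A)) ` Bs)"
    unfolding mrank_def dual_matroid_def by (simp add: image_image)
  also have "\<dots> = Max (h ` (\<lambda>B. card (B \<inter> (E - A))) ` Bs)"
    using key by (simp add: image_image cong: image_cong)
  also have "\<dots> = h (Max ((\<lambda>B. card (B \<inter> (E - A))) ` Bs))"
    by (rule mono_Max_commute[symmetric]) (use fBs ne in \<open>auto simp: h_def mono_def\<close>)
  also have "\<dots> = h (mrank Bs (E - A))" unfolding mrank_def ..
  finally have eq: "mrank (dual_matroid E Bs) A = h (mrank Bs (E - A))" .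
  obtain B where B: "B \<in> Bs" using ne by blast
  have "card (B \<inter> (E - A)) \<le> mrank Bs (E - A)" unfolding mrank_def using fBs B by auto
  moreover have "h (card (B \<inter> (E - A))) + r = card A + card (B \<inter> (E - A))"
  proof -
    have "card ((E - B) \<inter> A) = h (card (B \<inter> (E - A)))" using key B by blast
    have cB: "card B = r" using basis_card_rank[OF M B] r_def by simp
    have fB: "finite B" using B M matroid_finite_basis by blast
    have "card (B \<inter> A) + card (B \<inter> (E - A)) = card B"
    proof -
      have "B = (B \<inter> A) \<union> (B \<inter> (E - A))" using sub B A by auto
      moreover have "(B \<inter> A) \<inter> (B \<inter> (E - A)) = {}" by auto
      ultimately show ?thesis using fB by (metis card_Un_disjoint finite_Int)
    qed
    moreover have "card (B \<inter> A) \<le> card A" using fA by (simp add: card_mono)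
    ultimately show ?thesis using cB unfolding h_def by linarith
  qed
  ultimately have "r \<le> card A + mrank Bs (E - A)" unfolding h_def by linarith
  thus ?thesis using eq unfolding h_def r_def by simp
qed

lemma mrank_empty: "finite Bs \<Longrightarrow> Bs \<noteq> {} \<Longrightarrow> mrank Bs {} = 0"
  unfolding mrank_def by (simp add: image_constant_conv)

lemma sum_Pow_compl:
  assumes "finite E"
  shows "(\<Sum>A\<in>Pow E. g (E - A)) = (\<Sum>A\<in>Pow E. g A)"
  by (rule sum.reindex_bij_witness[of _ "\<lambda>A. E - A" "\<lambda>A. E - A"]) auto

lemma beta_dual:
  assumes M: "matroid E Bs" and E: "E = insert x F" "x \<notin> F"
  shows "beta E (dual_matroid E Bs) = beta E Bs - (-1) ^ (card E - mrank Bs E) * (if F = {} then 1 else 0)"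
proof -
  define r where "r = mrank Bs E"
  define R where "R = (\<Sum>A\<in>Pow E. (-1::int) ^ card A * int (mrank Bs A))"
  have fE: "finite E" and ne: "Bs \<noteq> {}" and sub: "\<forall>B\<in>Bs. B \<subseteq> E" using M unfolding matroid_def by auto
  have fF: "finite F" using fE E by auto
  have fBs: "finite Bs" using matroid_finite_Bs[OF M] .
  have rle: "r \<le> card E" unfolding r_def using mrank_le_card[OF fBs ne fE] .
  have b: "beta E Bs = (-1) ^ r * R" unfolding R_def r_def
    by (rule beta_crapo) (use fE fBs ne sub E in auto)
  have fD: "finite (dual_matroid E Bs)" "dual_matroid E Bs \<noteq> {}" "\<forall>B\<in>dual_matroid E Bs. B \<subseteq> E"
    using fBs ne unfolding dual_matroid_def by auto
  have bd: "beta E (dual_matroid E Bs) = (-1) ^ mrank (dual_matroid E Bs) E *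
      (\<Sum>A\<in>Pow E. (-1) ^ card A * int (mrank (dual_matroid E Bs) A))"
    by (rule beta_crapo) (use fE fD E in auto)
  have rdE: "mrank (dual_matroid E Bs) E = card E - r"
    using mrank_dual[OF M, of E] mrank_empty[OF fBs ne] rle r_def by simp
  have "(\<Sum>A\<in>Pow E. (-1) ^ card A * int (mrank (dual_matroid E Bs) A)) =
        (\<Sum>A\<in>Pow E. (-1) ^ card A * int (card A) - int r * (-1) ^ card A + (-1) ^ card A * int (mrank Bs (E - A)))"
    by (rule sum.cong) (auto simp: mrank_dual[OF M] r_def algebra_simps)
  also have "\<dots> = (\<Sum>A\<in>Pow E. (-1) ^ card A * int (card A)) - int r * (\<Sum>A\<in>Pow E. (-1) ^ card A)
       + (\<Sum>A\<in>Pow E. (-1) ^ card A * int (mrank Bs (E - A)))"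
    by (simp add: sum.distrib sum_subtractf sum_distrib_left)
  also have "(\<Sum>A\<in>Pow E. (-1::int) ^ card A * int (card A)) = - (if F = {} then 1 else 0)"
    using sum_Pow_sign_card[OF fF E(2)] E by simp
  also have "(\<Sum>A\<in>Pow E. (-1::int) ^ card A) = 0" using sum_Pow_sign[OF fE] E by simp
  also have "(\<Sum>A\<in>Pow E. (-1) ^ card A * int (mrank Bs (E - A))) =
             (\<Sum>A\<in>Pow E. (-1) ^ card E * ((-1) ^ card (E - A) * int (mrank Bs (E - A))))"
  proof (rule sum.cong)
    fix A assume "A \<in> Pow E"
    hence "card (E - A) + card A = card E" using fE
      by (metis PowD card_Diff_subset finite_subset card_mono le_add_diff_inverse2)
    hence "(-1::int) ^ card A = (-1) ^ card E * (-1) ^ card (E - A)"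
      unfolding minus_one_power_iff by (auto; presburger)
    thus "(-1) ^ card A * int (mrank Bs (E - A)) = (-1) ^ card E * ((-1) ^ card (E - A) * int (mrank Bs (E - A)))"
      by simp
  qed simp
  also have "\<dots> = (-1) ^ card E * R"
    unfolding R_def sum_distrib_left[symmetric]
    using sum_Pow_compl[OF fE, of "\<lambda>A. (-1) ^ card A * int (mrank Bs A)"] by simp
  finally have S: "(\<Sum>A\<in>Pow E. (-1) ^ card A * int (mrank (dual_matroid E Bs) A)) =
      - (if F = {} then 1 else 0) + (-1) ^ card E * R" by simp
  have sg: "(-1::int) ^ (card E - r) * (-1) ^ card E = (-1) ^ r"
    using rle unfolding minus_one_power_iff by (auto; presburger)
  show ?thesis unfolding bd rdE S b r_def[symmetric]
    using sg by (simp add: algebra_simps)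
qed




lemma interp_coeff:
  fixes t :: "nat \<Rightarrow> real" and g :: "real poly"
  assumes fT: "finite T" and inj: "inj_on t T" and dg: "degree g < card T"
  shows "(\<Sum>c\<in>T. poly g (t c) / (\<Prod>j\<in>T - {c}. (t c - t j))) = coeff g (card T - 1)"
proof -
  define Q where "Q c = (\<Prod>j\<in>T - {c}. [:- t j, 1:])" for c
  define P where "P = (\<Sum>c\<in>T. smult (poly g (t c) / (\<Prod>j\<in>T - {c}. (t c - t j))) (Q c))"
  have degQ: "degree (Q c) = card T - 1" if "c \<in> T" for c
  proof -
    have "degree (Q c) = (\<Sum>j\<in>T - {c}. degree [:- t j, 1:])" unfolding Q_def
      by (rule degree_prod_eq_sum_degree) auto
    thus ?thesis using that fT by simp
  qed
  have lcQ: "coeff (Q c) (card T - 1) = 1" if "c \<in> T" for c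
  proof -
    have "lead_coeff (Q c) = 1" unfolding Q_def lead_coeff_prod by simp
    thus ?thesis using degQ[OF that] by simp
  qed
  have nz: "(\<Prod>j\<in>T - {c}. (t c - t j)) \<noteq> 0" if "c \<in> T" for c
    using inj that fT by (auto simp: prod_zero_iff inj_on_def)
  have polyP: "poly P (t d) = poly g (t d)" if "d \<in> T" for d
  proof -
    have "poly P (t d) = (\<Sum>c\<in>T. poly g (t c) / (\<Prod>j\<in>T - {c}. (t c - t j)) * (\<Prod>j\<in>T - {c}. (t d - t j)))"
      unfolding P_def Q_def by (simp add: poly_sum poly_prod)
    also have "\<dots> = poly g (t d) / (\<Prod>j\<in>T - {d}. (t d - t j)) * (\<Prod>j\<in>T - {d}. (t d - t j))"
    proof (rule sum.remove[OF fT that, THEN trans])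
      have "(\<Sum>c\<in>T - {d}. poly g (t c) / (\<Prod>j\<in>T - {c}. (t c - t j)) * (\<Prod>j\<in>T - {c}. (t d - t j))) = 0"
      proof (rule sum.neutral, intro ballI)
        fix c assume "c \<in> T - {d}"
        hence "(\<Prod>j\<in>T - {c}. (t d - t j)) = 0" using fT that by (auto simp: prod_zero_iff)
        thus "poly g (t c) / (\<Prod>j\<in>T - {c}. (t c - t j)) * (\<Prod>j\<in>T - {c}. (t d - t j)) = 0" by simp
      qed
      thus "poly g (t d) / (\<Prod>j\<in>T - {d}. (t d - t j)) * (\<Prod>j\<in>T - {d}. (t d - t j)) +
          (\<Sum>c\<in>T - {d}. poly g (t c) / (\<Prod>j\<in>T - {c}. (t c - t j)) * (\<Prod>j\<in>T - {c}. (t d - t j))) =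
          poly g (t d) / (\<Prod>j\<in>T - {d}. (t d - t j)) * (\<Prod>j\<in>T - {d}. (t d - t j))" by simp
    qed
    also have "\<dots> = poly g (t d)" using nz[OF that] by simp
    finally show ?thesis .
  qed
  have degP: "degree P \<le> card T - 1" unfolding P_def
    by (rule degree_sum_le[OF fT]) (use degQ in \<open>auto intro: le_trans[OF degree_smult_le]\<close>)
  have "P - g = 0"
  proof (rule ccontr)
    assume ne: "P - g \<noteq> 0"
    have "t ` T \<subseteq> {x. poly (P - g) x = 0}" using polyP by auto
    hence "card (t ` T) \<le> card {x. poly (P - g) x = 0}"
      using poly_roots_finite[OF ne] by (rule card_mono[rotated])
    also have "\<dots> \<le> degree (P - g)" by (rule card_poly_roots_bound[OF ne])
    also have "\<dots> \<le> max (degree P) (degree g)" by (rule degree_diff_le_max)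
    also have "\<dots> < card T" using degP dg by auto
    finally show False using card_image[OF inj] by simp
  qed
  hence gP: "g = P" by simp
  have "coeff P (card T - 1) = (\<Sum>c\<in>T. poly g (t c) / (\<Prod>j\<in>T - {c}. (t c - t j)) * coeff (Q c) (card T - 1))"
    unfolding P_def by (simp add: coeff_sum)
  hence "coeff g (card T - 1) = (\<Sum>c\<in>T. poly g (t c) / (\<Prod>j\<in>T - {c}. (t c - t j)) * coeff (Q c) (card T - 1))"
    using gP by simp
  also have "\<dots> = (\<Sum>c\<in>T. poly g (t c) / (\<Prod>j\<in>T - {c}. (t c - t j)))"
    using lcQ by simp
  finally show ?thesis by simp
qed

lemma lagrange0:
  fixes t :: "nat \<Rightarrow> real"
  assumes fT: "finite T" and inj: "inj_on t T" and c2: "2 \<le> card T"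
  shows "(\<Sum>c\<in>T. 1 / (\<Prod>j\<in>T - {c}. (t c - t j))) = 0"
  using interp_coeff[OF fT inj, of 1] c2 by simp

lemma lagrangeW:
  fixes t :: "nat \<Rightarrow> real"
  assumes fT: "finite T" and inj: "inj_on t T" and ne: "T \<noteq> {}"
  shows "(\<Sum>c\<in>T. (\<Prod>j\<in>T - {c}. t j) / (\<Prod>j\<in>T - {c}. (t c - t j))) = (-1) ^ (card T - 1)"
proof -
  define F where "F = (\<Prod>j\<in>T. [:- t j, 1:])"
  define G where "G = synthetic_div F 0"
  have degF: "degree F = card T" unfolding F_def
    by (subst degree_prod_eq_sum_degree) auto
  have lcF: "coeff F (card T) = 1"
  proof -
    have "lead_coeff F = 1" unfolding F_def lead_coeff_prod by simp
    thus ?thesis using degF by simp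
  qed
  have FG: "F = [:0, 1:] * G + [:poly F 0:]" using synthetic_div_correct'[of 0 F] G_def by simp
  have cT: "card T > 0" using fT ne by (simp add: card_gt_0_iff)
  have degG: "degree G < card T" using degF cT G_def by (simp add: degree_synthetic_div)
  have cG: "coeff G (card T - 1) = 1"
  proof -
    obtain m where m: "card T = Suc m" using cT gr0_conv_Suc by blast
    have "coeff F (card T) = coeff ([:0, 1:] * G + [:poly F 0:]) (card T)"
      using arg_cong[OF FG, of "\<lambda>p. coeff p (card T)"] .
    hence "coeff F (card T) = coeff ([:0, 1:] * G) (card T)" using m by simp
    also have "\<dots> = coeff G (card T - 1)" using cT by (cases "card T") (auto simp: coeff_pCons_Suc)
    finally show ?thesis using lcF by simp
  qed
  have pG: "poly G (t c) = (\<Prod>j\<in>T - {c}. - t j)" if c: "c \<in> T" for c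
  proof -
    define Qc where "Qc = (\<Prod>j\<in>T - {c}. [:- t j, 1:])"
    have FQ: "F = [:- t c, 1:] * Qc" unfolding F_def Qc_def using fT c by (simp add: prod.remove)
    have pQ: "poly Qc 0 = (\<Prod>j\<in>T - {c}. - t j)" unfolding Qc_def by (simp add: poly_prod)
    show ?thesis
    proof (cases "t c = 0")
      case True
      have "poly F 0 = 0" using FQ True by simp
      hence "[:0, 1:] * G = [:0, 1:] * Qc" using FG FQ True by simp
      hence "G = Qc" by simp
      thus ?thesis using pQ True by simp
    next
      case False
      have "poly F (t c) = 0" using FQ by simp
      moreover have "poly F (t c) = poly ([:0, 1:] * G + [:poly F 0:]) (t c)"
        using arg_cong[OF FG, of "\<lambda>p. poly p (t c)"] .
      ultimately have "t c * poly G (t c) + poly F 0 = 0" by simp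
      moreover have "poly F 0 = - t c * poly Qc 0" using FQ by simp
      ultimately have "t c * (poly G (t c) - poly Qc 0) = 0" by (simp add: algebra_simps)
      thus ?thesis using False pQ by simp
    qed
  qed
  have "(\<Sum>c\<in>T. poly G (t c) / (\<Prod>j\<in>T - {c}. (t c - t j))) = 1"
    using interp_coeff[OF fT inj degG] cG by simp
  moreover have "poly G (t c) = (-1) ^ (card T - 1) * (\<Prod>j\<in>T - {c}. t j)" if "c \<in> T" for c
    using pG[OF that] fT that by (simp add: prod_uminus card_Diff_singleton)
  ultimately have "(\<Sum>c\<in>T. (-1) ^ (card T - 1) * (\<Prod>j\<in>T - {c}. t j) / (\<Prod>j\<in>T - {c}. (t c - t j))) = 1"
    by simp
  hence "(-1) ^ (card T - 1) * (\<Sum>c\<in>T. (\<Prod>j\<in>T - {c}. t j) / (\<Prod>j\<in>T - {c}. (t c - t j))) = 1"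
    by (simp add: sum_distrib_left)
  hence "(-1) ^ (card T - 1) * ((-1) ^ (card T - 1) * (\<Sum>c\<in>T. (\<Prod>j\<in>T - {c}. t j) / (\<Prod>j\<in>T - {c}. (t c - t j)))) = (-1) ^ (card T - 1)"
    by simp
  thus ?thesis by (simp add: mult.assoc[symmetric] power_add[symmetric] flip: power_mult_distrib)
qed




fun Dl :: "(nat \<Rightarrow> real) \<Rightarrow> nat list \<Rightarrow> real" where
  "Dl t (a # b # L) = (t a - t b) * Dl t (b # L)"
| "Dl t _ = 1"

lemma Dl_nth: "Dl t L = (\<Prod>i<length L - 1. (t (L ! i) - t (L ! Suc i)))"
proof (induction t L rule: Dl.induct)
  case (1 t a b L)
  have "(\<Prod>i<length (a # b # L) - 1. (t ((a # b # L) ! i) - t ((a # b # L) ! Suc i)))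
      = (\<Prod>i<Suc (length L). (t ((a # b # L) ! i) - t ((a # b # L) ! Suc i)))" by simp
  also have "\<dots> = (t a - t b) * (\<Prod>i<length L. (t ((a # b # L) ! Suc i) - t ((a # b # L) ! Suc (Suc i))))"
    by (subst prod.lessThan_Suc_shift) simp
  also have "\<dots> = (t a - t b) * Dl t (b # L)" using 1 by simp
  finally show ?case by simp
qed auto

lemma Dl_append: "Dl t (xs @ [b]) * Dl t (b # ys) = Dl t (xs @ b # ys)"
proof (induction xs)
  case Nil
  then show ?case by simp
next
  case (Cons a xs)
  then show ?case by (cases xs) (simp_all add: mult.assoc)
qed

lemma Dl_snoc2: "Dl t (xs @ [b, a]) = Dl t (xs @ [b]) * (t b - t a)"
  using Dl_append[of t xs b "[a]"] by simp

lemma Dl_rev: "Dl t (rev L) = Dl (\<lambda>x. - t x) L"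
proof (induction t L rule: Dl.induct)
  case (1 t a b L)
  have "Dl t (rev (a # b # L)) = Dl t (rev L @ [b, a])" by simp
  also have "\<dots> = Dl t (rev (b # L)) * (t b - t a)" by (simp add: Dl_snoc2)
  also have "\<dots> = Dl (\<lambda>x. - t x) (a # b # L)" using 1 by simp
  finally show ?case .
qed auto

lemma sum_perms_cons:
  assumes "finite S" "S \<noteq> {}"
  shows "(\<Sum>L\<in>permutations_of_set S. f L) = (\<Sum>b\<in>S. \<Sum>L\<in>permutations_of_set (S - {b}). f (b # L))"
proof -
  have "(\<Sum>L\<in>permutations_of_set S. f L) = (\<Sum>b\<in>S. \<Sum>L\<in>(#) b ` permutations_of_set (S - {b}). f L)"
    unfolding permutations_of_set_nonempty[OF assms(2)]
    by (rule sum.UNION_disjoint) (use assms in auto)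
  also have "\<dots> = (\<Sum>b\<in>S. \<Sum>L\<in>permutations_of_set (S - {b}). f (b # L))"
    by (rule sum.cong) (auto simp: sum.reindex)
  finally show ?thesis .
qed

lemma sum_head:
  assumes "finite S" "a \<notin> S" "inj_on t (insert a S)"
  shows "(\<Sum>L\<in>permutations_of_set S. 1 / Dl t (a # L)) = 1 / (\<Prod>j\<in>S. (t a - t j))"
  using assms
proof (induction "card S" arbitrary: S a rule: less_induct)
  case less
  show ?case
  proof (cases "S = {}")
    case True
    then show ?thesis by simp
  next
    case False
    have "(\<Sum>L\<in>permutations_of_set S. 1 / Dl t (a # L)) =
          (\<Sum>b\<in>S. \<Sum>L\<in>permutations_of_set (S - {b}). 1 / Dl t (a # b # L))"
      by (rule sum_perms_cons) (use less False in auto)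
    also have "\<dots> = (\<Sum>b\<in>S. 1 / (t a - t b) * (\<Sum>L\<in>permutations_of_set (S - {b}). 1 / Dl t (b # L)))"
      by (simp add: sum_distrib_left)
    also have "\<dots> = (\<Sum>b\<in>S. 1 / (t a - t b) * (1 / (\<Prod>j\<in>S - {b}. (t b - t j))))"
    proof (rule sum.cong)
      fix b assume b: "b \<in> S"
      have "(\<Sum>L\<in>permutations_of_set (S - {b}). 1 / Dl t (b # L)) = 1 / (\<Prod>j\<in>S - {b}. (t b - t j))"
      proof (rule less.hyps)
        show "card (S - {b}) < card S" by (rule card_Diff1_less) (use less.prems b in auto)
        show "finite (S - {b})" "b \<notin> S - {b}" using less.prems by auto
        show "inj_on t (insert b (S - {b}))" by (rule inj_on_subset[OF less.prems(3)]) (use b in auto)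
      qed
      thus "1 / (t a - t b) * (\<Sum>L\<in>permutations_of_set (S - {b}). 1 / Dl t (b # L)) =
            1 / (t a - t b) * (1 / (\<Prod>j\<in>S - {b}. (t b - t j)))" by simp
    qed simp
    also have "\<dots> = 1 / (\<Prod>j\<in>S. (t a - t j))"
    proof -
      define T where "T = insert a S"
      have c0: "card S \<noteq> 0" using less.prems False by simp
      have cT: "card T = Suc (card S)" using less.prems T_def by (simp add: card_insert_disjoint)
      have fT: "finite T" "card T \<ge> 2" using less.prems(1) T_def apply simp
        using cT c0 by linarith
      have L0: "(\<Sum>c\<in>T. 1 / (\<Prod>j\<in>T - {c}. (t c - t j))) = 0"
        by (rule lagrange0) (use fT less.prems T_def in auto)
      have "(\<Sum>c\<in>T. 1 / (\<Prod>j\<in>T - {c}. (t c - t j))) =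
            1 / (\<Prod>j\<in>S. (t a - t j)) + (\<Sum>c\<in>S. 1 / (\<Prod>j\<in>T - {c}. (t c - t j)))"
        unfolding T_def using less.prems by (simp add: sum.insert)
      moreover have "(\<Sum>c\<in>S. 1 / (\<Prod>j\<in>T - {c}. (t c - t j))) =
           - (\<Sum>b\<in>S. 1 / (t a - t b) * (1 / (\<Prod>j\<in>S - {b}. (t b - t j))))"
      proof -
        have "(\<Sum>c\<in>S. 1 / (\<Prod>j\<in>T - {c}. (t c - t j))) = (\<Sum>b\<in>S. - (1 / (t a - t b) * (1 / (\<Prod>j\<in>S - {b}. (t b - t j)))))"
        proof (rule sum.cong)
          fix b assume b: "b \<in> S"
          have "T - {b} = insert a (S - {b})" using T_def b less.prems by auto
          hence "(\<Prod>j\<in>T - {b}. (t b - t j)) = (t b - t a) * (\<Prod>j\<in>S - {b}. (t b - t j))"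
            using less.prems by simp
          moreover have "1 / ((t b - t a) * X) = - (1 / (t a - t b) * (1 / X))" for X :: real
            by (metis minus_diff_eq mult_minus_left divide_minus_right times_divide_times_eq mult_1)
          ultimately show "1 / (\<Prod>j\<in>T - {b}. (t b - t j)) = - (1 / (t a - t b) * (1 / (\<Prod>j\<in>S - {b}. (t b - t j))))"
            by simp
        qed simp
        thus ?thesis by (simp add: sum_negf)
      qed
      ultimately show ?thesis using L0 by simp
    qed
    finally show ?thesis .
  qed
qed

lemma sum_tail:
  assumes "finite S" "b \<notin> S" "inj_on t (insert b S)"
  shows "(\<Sum>L\<in>permutations_of_set S. 1 / Dl t (L @ [b])) = 1 / (\<Prod>j\<in>S. (t j - t b))"
proof -
  have "(\<Sum>L\<in>permutations_of_set S. 1 / Dl t (L @ [b])) = (\<Sum>L\<in>permutations_of_set S. 1 / Dl (\<lambda>x. - t x) (b # rev L))"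
  proof (rule sum.cong)
    fix L
    have "Dl t (L @ [b]) = Dl t (rev (b # rev L))" by simp
    also have "\<dots> = Dl (\<lambda>x. - t x) (b # rev L)" by (rule Dl_rev)
    finally show "1 / Dl t (L @ [b]) = 1 / Dl (\<lambda>x. - t x) (b # rev L)" by simp
  qed simp
  also have "\<dots> = (\<Sum>L\<in>rev ` permutations_of_set S. 1 / Dl (\<lambda>x. - t x) (b # L))"
  proof -
    have "inj_on rev (permutations_of_set S)" by (rule inj_onI) simp
    thus ?thesis by (simp only: sum.reindex o_def)
  qed
  also have "\<dots> = (\<Sum>L\<in>permutations_of_set S. 1 / Dl (\<lambda>x. - t x) (b # L))" by simp
  also have "\<dots> = 1 / (\<Prod>j\<in>S. (- t b - - t j))"
    by (rule sum_head) (use assms in \<open>auto simp: inj_on_def\<close>)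
  finally show ?thesis by simp
qed




lemma split_at_b:
  assumes "b \<in> set L"
  shows "L = takeWhile (\<lambda>x. x \<noteq> b) L @ b # tl (dropWhile (\<lambda>x. x \<noteq> b) L)"
proof -
  have ne: "dropWhile (\<lambda>x. x \<noteq> b) L \<noteq> []" using assms by (simp add: dropWhile_eq_Nil_conv)
  have hb: "hd (dropWhile (\<lambda>x. x \<noteq> b) L) = b" using hd_dropWhile[OF ne] by simp
  have "dropWhile (\<lambda>x. x \<noteq> b) L = hd (dropWhile (\<lambda>x. x \<noteq> b) L) # tl (dropWhile (\<lambda>x. x \<noteq> b) L)"
    using ne by simp
  hence "dropWhile (\<lambda>x. x \<noteq> b) L = b # tl (dropWhile (\<lambda>x. x \<noteq> b) L)" using hb by simp
  hence "takeWhile (\<lambda>x. x \<noteq> b) L @ dropWhile (\<lambda>x. x \<noteq> b) L = takeWhile (\<lambda>x. x \<noteq> b) L @ b # tl (dropWhile (\<lambda>x. x \<noteq> b) L)"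
    by simp
  thus ?thesis by (simp only: takeWhile_dropWhile_id)
qed

lemma take_drop_b:
  assumes "b \<notin> set L1"
  shows "takeWhile (\<lambda>x. x \<noteq> b) (L1 @ b # L2) = L1" "tl (dropWhile (\<lambda>x. x \<noteq> b) (L1 @ b # L2)) = L2"
  using assms by (induction L1) auto

lemma sum_split_pre:
  fixes t :: "nat \<Rightarrow> real" and h :: "nat set \<Rightarrow> real"
  assumes fE: "finite E" and bE: "b \<in> E" and inj: "inj_on t E"
  shows "(\<Sum>L\<in>permutations_of_set E. h (set (takeWhile (\<lambda>x. x \<noteq> b) L)) / Dl t L)
       = (\<Sum>P\<in>Pow (E - {b}). (-1) ^ card P * h P) / (\<Prod>j\<in>E - {b}. (t b - t j))"
proof -
  define Sg where "Sg = Sigma (Pow (E - {b})) (\<lambda>P. permutations_of_set P \<times> permutations_of_set (E - {b} - P))"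
  define tw where "tw L = takeWhile (\<lambda>x. x \<noteq> b) L" for L :: "nat list"
  define dw where "dw L = tl (dropWhile (\<lambda>x. x \<noteq> b) L)" for L :: "nat list"
  have step1: "(\<Sum>L\<in>permutations_of_set E. h (set (takeWhile (\<lambda>x. x \<noteq> b) L)) / Dl t L)
      = (\<Sum>x\<in>Sg. h (fst x) / Dl t (fst (snd x) @ b # snd (snd x)))"
  proof (rule sum.reindex_bij_witness[where j = "\<lambda>L. (set (tw L), (tw L, dw L))"
                                       and i = "\<lambda>x. fst (snd x) @ b # snd (snd x)"])
    fix L assume L: "L \<in> permutations_of_set E"
    have sp: "L = tw L @ b # dw L" unfolding tw_def dw_def
      by (rule split_at_b) (use L bE in \<open>auto dest: permutations_of_setD\<close>)
    show "fst (snd (set (tw L), tw L, dw L)) @ b # snd (snd (set (tw L), tw L, dw L)) = L"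
      using sp by simp
    have d: "distinct (tw L @ b # dw L)" "set (tw L @ b # dw L) = E" using sp L
      by (metis permutations_of_setD)+
    show "(set (tw L), tw L, dw L) \<in> Sg" unfolding Sg_def using d by auto
    show "h (fst (set (tw L), tw L, dw L)) / Dl t (fst (snd (set (tw L), tw L, dw L)) @ b # snd (snd (set (tw L), tw L, dw L)))
        = h (set (takeWhile (\<lambda>x. x \<noteq> b) L)) / Dl t L"
      using sp by (simp add: tw_def)
  next
    fix x assume x: "x \<in> Sg"
    obtain P L1 L2 where xe: "x = (P, L1, L2)" by (metis prod.collapse)
    have h1: "P \<subseteq> E - {b}" "set L1 = P" "distinct L1" "set L2 = E - {b} - P" "distinct L2"
      using x xe unfolding Sg_def by (auto dest: permutations_of_setD)
    have nb: "b \<notin> set L1" using h1 by auto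
    show "(set (tw (fst (snd x) @ b # snd (snd x))), tw (fst (snd x) @ b # snd (snd x)), dw (fst (snd x) @ b # snd (snd x))) = x"
      using take_drop_b[OF nb, of L2] h1 xe unfolding tw_def dw_def by simp
    show "fst (snd x) @ b # snd (snd x) \<in> permutations_of_set E"
      using h1 xe bE by (intro permutations_of_setI) auto
  qed
  have step2: "(\<Sum>x\<in>Sg. h (fst x) / Dl t (fst (snd x) @ b # snd (snd x)))
     = (\<Sum>P\<in>Pow (E - {b}). h P * ((\<Sum>L1\<in>permutations_of_set P. 1 / Dl t (L1 @ [b])) *
                                  (\<Sum>L2\<in>permutations_of_set (E - {b} - P). 1 / Dl t (b # L2))))"
  proof -
    have "(\<Sum>x\<in>Sg. h (fst x) / Dl t (fst (snd x) @ b # snd (snd x)))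
       = (\<Sum>P\<in>Pow (E - {b}). \<Sum>y\<in>permutations_of_set P \<times> permutations_of_set (E - {b} - P).
            h P / Dl t (fst y @ b # snd y))"
      unfolding Sg_def by (subst sum.Sigma) (use fE in \<open>auto simp: split_def\<close>)
    also have "\<dots> = (\<Sum>P\<in>Pow (E - {b}). \<Sum>L1\<in>permutations_of_set P. \<Sum>L2\<in>permutations_of_set (E - {b} - P).
            h P * (1 / Dl t (L1 @ [b]) * (1 / Dl t (b # L2))))"
    proof (rule sum.cong[OF refl])
      fix P
      show "(\<Sum>y\<in>permutations_of_set P \<times> permutations_of_set (E - {b} - P). h P / Dl t (fst y @ b # snd y)) =
         (\<Sum>L1\<in>permutations_of_set P. \<Sum>L2\<in>permutations_of_set (E - {b} - P). h P * (1 / Dl t (L1 @ [b]) * (1 / Dl t (b # L2))))"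
      proof -
        have "(\<Sum>y\<in>permutations_of_set P \<times> permutations_of_set (E - {b} - P). h P / Dl t (fst y @ b # snd y)) =
           (\<Sum>(L1, L2)\<in>permutations_of_set P \<times> permutations_of_set (E - {b} - P). h P * (1 / Dl t (L1 @ [b]) * (1 / Dl t (b # L2))))"
        proof (rule sum.cong[OF refl])
          fix y :: "nat list \<times> nat list"
          obtain L1 L2 where y: "y = (L1, L2)" by (cases y)
          show "h P / Dl t (fst y @ b # snd y) = (case y of (L1, L2) \<Rightarrow> h P * (1 / Dl t (L1 @ [b]) * (1 / Dl t (b # L2))))"
            using Dl_append[of t L1 b L2, symmetric] y by simp
        qed
        thus ?thesis by (simp only: sum.cartesian_product)
      qed
    qed
    also have "\<dots> = (\<Sum>P\<in>Pow (E - {b}). h P * ((\<Sum>L1\<in>permutations_of_set P. 1 / Dl t (L1 @ [b])) *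
                                  (\<Sum>L2\<in>permutations_of_set (E - {b} - P). 1 / Dl t (b # L2))))"
    proof (rule sum.cong[OF refl])
      fix P
      have e: "(\<Sum>L1\<in>permutations_of_set P. 1 / Dl t (L1 @ [b])) * (\<Sum>L2\<in>permutations_of_set (E - {b} - P). 1 / Dl t (b # L2))
         = (\<Sum>L1\<in>permutations_of_set P. \<Sum>L2\<in>permutations_of_set (E - {b} - P). 1 / Dl t (L1 @ [b]) * (1 / Dl t (b # L2)))"
        by (rule sum_product)
      show "(\<Sum>L1\<in>permutations_of_set P. \<Sum>L2\<in>permutations_of_set (E - {b} - P). h P * (1 / Dl t (L1 @ [b]) * (1 / Dl t (b # L2)))) =
        h P * ((\<Sum>L1\<in>permutations_of_set P. 1 / Dl t (L1 @ [b])) * (\<Sum>L2\<in>permutations_of_set (E - {b} - P). 1 / Dl t (b # L2)))"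
        unfolding e by (simp only: sum_distrib_left)
    qed
    finally show ?thesis .
  qed
  have step3: "h P * ((\<Sum>L1\<in>permutations_of_set P. 1 / Dl t (L1 @ [b])) *
                      (\<Sum>L2\<in>permutations_of_set (E - {b} - P). 1 / Dl t (b # L2)))
       = (-1) ^ card P * h P / (\<Prod>j\<in>E - {b}. (t b - t j))" if P: "P \<in> Pow (E - {b})" for P
  proof -
    have fP: "finite P" "finite (E - {b} - P)" using P fE finite_subset by auto
    have "(\<Sum>L1\<in>permutations_of_set P. 1 / Dl t (L1 @ [b])) = 1 / (\<Prod>j\<in>P. (t j - t b))"
    proof (rule sum_tail)
      show "inj_on t (insert b P)" by (rule inj_on_subset[OF inj]) (use P bE in auto)
    qed (use fP P in auto)
    moreover have "(\<Sum>L2\<in>permutations_of_set (E - {b} - P). 1 / Dl t (b # L2)) = 1 / (\<Prod>j\<in>E - {b} - P. (t b - t j))"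
    proof (rule sum_head)
      show "inj_on t (insert b (E - {b} - P))" by (rule inj_on_subset[OF inj]) (use P bE in auto)
    qed (use fP P in auto)
    moreover have "(\<Prod>j\<in>E - {b}. (t b - t j)) = (\<Prod>j\<in>P. (t b - t j)) * (\<Prod>j\<in>E - {b} - P. (t b - t j))"
      using P fE by (metis PowD finite_Diff prod.subset_diff mult.commute)
    moreover have "(\<Prod>j\<in>P. (t j - t b)) = (-1) ^ card P * (\<Prod>j\<in>P. (t b - t j))"
    proof -
      have "(\<Prod>j\<in>P. (t j - t b)) = (\<Prod>j\<in>P. (-1) * (t b - t j))" by (rule prod.cong) auto
      also have "\<dots> = (-1) ^ card P * (\<Prod>j\<in>P. (t b - t j))" unfolding prod.distrib by simp
      finally show ?thesis .
    qed
    moreover have "1 / ((-1) ^ k * x) = (-1) ^ k / x" for k and x :: real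
      by (cases "even k") auto
    ultimately show ?thesis
      by (simp add: mult.assoc)
  qed
  have "(\<Sum>L\<in>permutations_of_set E. h (set (takeWhile (\<lambda>x. x \<noteq> b) L)) / Dl t L)
     = (\<Sum>P\<in>Pow (E - {b}). (-1) ^ card P * h P / (\<Prod>j\<in>E - {b}. (t b - t j)))"
    unfolding step1 step2 by (rule sum.cong[OF refl]) (rule step3)
  thus ?thesis by (simp add: sum_divide_distrib)
qed




lemma coeff_lin_mult_Suc:
  fixes c :: real
  shows "coeff ([:1, c:] * p) (Suc m) = coeff p (Suc m) + c * coeff p m"
  by (simp add: mult_pCons_left coeff_pCons_Suc)

lemma degree_prod_lin: "finite A \<Longrightarrow> degree (\<Prod>i\<in>A. [:1, w i:]) \<le> card A"
proof -
  assume fA: "finite A"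
  have "degree (\<Prod>i\<in>A. [:1, w i:]) \<le> sum (degree \<circ> (\<lambda>i. [:1, w i:])) A"
    by (rule degree_prod_sum_le[OF fA])
  also have "\<dots> \<le> sum (\<lambda>i. 1) A" by (rule sum_mono) simp
  finally show ?thesis by simp
qed

lemma coeff_prod_top:
  fixes w :: "nat \<Rightarrow> real"
  assumes "finite A"
  shows "coeff (\<Prod>i\<in>A. [:1, w i:]) (card A) = (\<Prod>i\<in>A. w i)"
  using assms
proof (induction A rule: finite_induct)
  case empty
  then show ?case by simp
next
  case (insert x F)
  have "coeff (\<Prod>i\<in>F. [:1, w i:]) (Suc (card F)) = 0"
    using degree_prod_lin[OF insert(1), of w] by (intro coeff_eq_0) simp
  then show ?case using insert by (simp add: coeff_lin_mult_Suc)
qed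

lemma coeff_prod_sub:
  fixes w :: "nat \<Rightarrow> real"
  assumes "finite A" "A \<noteq> {}"
  shows "coeff (\<Prod>i\<in>A. [:1, w i:]) (card A - 1) = (\<Sum>b\<in>A. \<Prod>i\<in>A - {b}. w i)"
  using assms
proof (induction A rule: finite_induct)
  case empty
  then show ?case by simp
next
  case (insert x F)
  show ?case
  proof (cases "F = {}")
    case True
    then show ?thesis by simp
  next
    case False
    obtain m where m: "card F = Suc m" using False insert(1) by (metis card_0_eq not0_implies_Suc)
    have "coeff (\<Prod>i\<in>insert x F. [:1, w i:]) (card (insert x F) - 1)
        = coeff ([:1, w x:] * (\<Prod>i\<in>F. [:1, w i:])) (Suc m)" using insert m by simp
    also have "\<dots> = (\<Prod>i\<in>F. w i) + w x * (\<Sum>b\<in>F. \<Prod>i\<in>F - {b}. w i)"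
      using coeff_prod_top[OF insert(1), of w] insert.IH[OF False] m by (simp add: coeff_lin_mult_Suc)
    also have "\<dots> = (\<Sum>b\<in>insert x F. \<Prod>i\<in>insert x F - {b}. w i)"
    proof -
      have "(\<Sum>b\<in>F. \<Prod>i\<in>insert x F - {b}. w i) = (\<Sum>b\<in>F. w x * (\<Prod>i\<in>F - {b}. w i))"
      proof (rule sum.cong[OF refl])
        fix b assume "b \<in> F"
        hence "insert x F - {b} = insert x (F - {b})" using insert by auto
        thus "(\<Prod>i\<in>insert x F - {b}. w i) = w x * (\<Prod>i\<in>F - {b}. w i)" using insert by simp
      qed
      thus ?thesis using insert by (simp add: sum_distrib_left)
    qed
    finally show ?thesis .
  qed
qed

lemma char_weight_pos: "i \<in> {0..n} \<Longrightarrow> char_weight n (\<lambda>j. - char_inv i j) t = t i"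
proof -
  assume i: "i \<in> {0..n}"
  have "char_weight n (\<lambda>j. - char_inv i j) t = (\<Sum>j\<in>{0..n}. if j = i then t j else 0)"
    unfolding char_weight_def by (rule sum.cong) (auto simp: char_inv_def)
  thus ?thesis using i by (simp add: sum.delta)
qed

lemma char_weight_neg: "i \<in> {0..n} \<Longrightarrow> char_weight n (char_inv i) t = - t i"
proof -
  assume i: "i \<in> {0..n}"
  have "char_weight n (char_inv i) t = (\<Sum>j\<in>{0..n}. if j = i then - t j else 0)"
    unfolding char_weight_def by (rule sum.cong) (auto simp: char_inv_def)
  thus ?thesis using i by (simp add: sum.delta)
qed

lemma chern_KS:
  assumes "lex_first_basis Bs \<sigma> \<subseteq> {0..n}"
  shows "chern n k (Kdual (class_S n Bs)) \<sigma> t = (if k < 0 then 0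
          else coeff (\<Prod>i\<in>lex_first_basis Bs \<sigma>. [:1, t i:]) (nat k))"
proof -
  have "(\<Prod>a\<in>#Kdual (class_S n Bs) \<sigma>. [:1, char_weight n a t:])
      = (\<Prod>i\<in>#mset_set (lex_first_basis Bs \<sigma>). [:1, char_weight n (\<lambda>j. - char_inv i j) t:])"
    unfolding Kdual_def class_S_def by (simp add: multiset.map_comp o_def)
  also have "\<dots> = (\<Prod>i\<in>lex_first_basis Bs \<sigma>. [:1, char_weight n (\<lambda>j. - char_inv i j) t:])"
    by (simp add: prod_unfold_prod_mset)
  also have "\<dots> = (\<Prod>i\<in>lex_first_basis Bs \<sigma>. [:1, t i:])"
    by (rule prod.cong[OF refl]) (use assms char_weight_pos in auto)
  finally show ?thesis unfolding chern_def by simp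
qed

lemma chern_Q:
  shows "chern n k (class_Q n Bs) \<sigma> t = (if k < 0 then 0
          else coeff (\<Prod>i\<in>{0..n} - lex_first_basis Bs \<sigma>. [:1, - t i:]) (nat k))"
proof -
  have "(\<Prod>a\<in>#class_Q n Bs \<sigma>. [:1, char_weight n a t:])
      = (\<Prod>i\<in>#mset_set ({0..n} - lex_first_basis Bs \<sigma>). [:1, char_weight n (char_inv i) t:])"
    unfolding class_Q_def by (simp add: multiset.map_comp o_def)
  also have "\<dots> = (\<Prod>i\<in>{0..n} - lex_first_basis Bs \<sigma>. [:1, char_weight n (char_inv i) t:])"
    by (simp add: prod_unfold_prod_mset)
  also have "\<dots> = (\<Prod>i\<in>{0..n} - lex_first_basis Bs \<sigma>. [:1, - t i:])"
    by (rule prod.cong[OF refl]) (use char_weight_neg in auto)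
  finally show ?thesis unfolding chern_def by simp
qed




lemma prod_neg_real: "finite A \<Longrightarrow> (\<Prod>i\<in>A. - (t i :: real)) = (-1) ^ card A * (\<Prod>i\<in>A. t i)"
proof -
  have "(\<Prod>i\<in>A. - t i) = (\<Prod>i\<in>A. (-1) * t i)" by (rule prod.cong) auto
  also have "\<dots> = (-1) ^ card A * (\<Prod>i\<in>A. t i)" unfolding prod.distrib by simp
  finally show ?thesis .
qed

lemma f1_formula:
  fixes t :: "nat \<Rightarrow> real"
  assumes B: "lex_first_basis Bs \<sigma> \<subseteq> {0..n}" "card (lex_first_basis Bs \<sigma>) = r"
  shows "chern n (int r - 1) (Kdual (class_S n Bs)) \<sigma> t * chern n (int (card {0..n}) - int r) (class_Q n Bs) \<sigma> t
       = (-1) ^ (n + 1 - r) * (\<Sum>b\<in>lex_first_basis Bs \<sigma>. \<Prod>j\<in>{0..n} - {b}. t j)"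
proof -
  define Bb where "Bb = lex_first_basis Bs \<sigma>"
  have fB: "finite Bb" using B Bb_def finite_subset by auto
  show ?thesis
  proof (cases "r = 0")
    case True
    hence "Bb = {}" using B fB Bb_def by simp
    then show ?thesis using True unfolding chern_def Bb_def by simp
  next
    case False
    have c1: "chern n (int r - 1) (Kdual (class_S n Bs)) \<sigma> t = (\<Sum>b\<in>Bb. \<Prod>i\<in>Bb - {b}. t i)"
    proof -
      have "Bb \<noteq> {}" using False B Bb_def by auto
      moreover have "nat (int r - 1) = card Bb - 1" using B Bb_def by simp
      ultimately show ?thesis using chern_KS[OF B(1)] False coeff_prod_sub[OF fB] Bb_def by simp
    qed
    have cE: "card ({0..n} - Bb) = n + 1 - r" using card_Diff_subset[OF fB, of "{0..n}"] B Bb_def by simp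
    have c2: "chern n (int (card {0..n}) - int r) (class_Q n Bs) \<sigma> t = (-1) ^ (n + 1 - r) * (\<Prod>i\<in>{0..n} - Bb. t i)"
    proof -
      have "nat (int (card {0..n}) - int r) = card ({0..n} - Bb)" using cE by simp
      moreover have "r \<le> n + 1" using card_mono[OF finite_atLeastAtMost B(1)] B(2) by simp
      hence "\<not> int (card {0..n}) - int r < 0" by simp
      ultimately show ?thesis
        using chern_Q[of n "int (card {0..n}) - int r" Bs \<sigma> t] coeff_prod_top[of "{0..n} - Bb" "\<lambda>i. - t i"]
          prod_neg_real[of "{0..n} - Bb" t] cE Bb_def by simp
    qed
    have "(\<Sum>b\<in>Bb. \<Prod>i\<in>Bb - {b}. t i) * (\<Prod>i\<in>{0..n} - Bb. t i) = (\<Sum>b\<in>Bb. \<Prod>j\<in>{0..n} - {b}. t j)"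
      unfolding sum_distrib_right
    proof (rule sum.cong[OF refl])
      fix b assume b: "b \<in> Bb"
      have "{0..n} - {b} = (Bb - {b}) \<union> ({0..n} - Bb)" using b B Bb_def by auto
      moreover have "(Bb - {b}) \<inter> ({0..n} - Bb) = {}" by auto
      ultimately show "(\<Prod>i\<in>Bb - {b}. t i) * (\<Prod>i\<in>{0..n} - Bb. t i) = (\<Prod>j\<in>{0..n} - {b}. t j)"
        using fB by (simp add: prod.union_disjoint)
    qed
    then show ?thesis using c1 c2 Bb_def by (simp add: algebra_simps)
  qed
qed

lemma f2_formula:
  fixes t :: "nat \<Rightarrow> real"
  assumes B: "lex_first_basis Bs \<sigma> \<subseteq> {0..n}" "card (lex_first_basis Bs \<sigma>) = r"
  shows "chern n (int r) (Kdual (class_S n Bs)) \<sigma> t * chern n (int (card {0..n}) - int r - 1) (class_Q n Bs) \<sigma> t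
       = (- ((-1) ^ (n + 1 - r))) * (\<Sum>j\<in>{0..n} - lex_first_basis Bs \<sigma>. \<Prod>i\<in>{0..n} - {j}. t i)"
proof -
  define Bb where "Bb = lex_first_basis Bs \<sigma>"
  have fB: "finite Bb" using B Bb_def finite_subset by auto
  have cE: "card ({0..n} - Bb) = n + 1 - r" using card_Diff_subset[OF fB, of "{0..n}"] B Bb_def by simp
  have rle: "r \<le> n + 1" using card_mono[OF finite_atLeastAtMost B(1)] B(2) by simp
  show ?thesis
  proof (cases "r = n + 1")
    case True
    hence e: "{0..n} - lex_first_basis Bs \<sigma> = {}" using cE fB Bb_def by (simp add: card_eq_0_iff)
    have "chern n (int (card {0..n}) - int r - 1) (class_Q n Bs) \<sigma> t = 0"
      using True unfolding chern_def by simp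
    then show ?thesis by (simp only: e sum.empty mult_0_right mult_0)
  next
    case False
    have ne: "{0..n} - Bb \<noteq> {}"
    proof
      assume "{0..n} - Bb = {}"
      hence "card ({0..n} - Bb) = 0" by simp
      thus False using cE rle False by simp
    qed
    have c1: "chern n (int r) (Kdual (class_S n Bs)) \<sigma> t = (\<Prod>i\<in>Bb. t i)"
      using chern_KS[OF B(1)] coeff_prod_top[OF fB] B Bb_def by simp
    have c2: "chern n (int (card {0..n}) - int r - 1) (class_Q n Bs) \<sigma> t
        = (\<Sum>j\<in>{0..n} - Bb. (-1) ^ (n - r) * (\<Prod>i\<in>{0..n} - Bb - {j}. t i))"
    proof -
      have "nat (int (card {0..n}) - int r - 1) = card ({0..n} - Bb) - 1" using cE rle False by simp
      moreover have "\<not> int (card {0..n}) - int r - 1 < 0" using rle False by simp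
      ultimately have "chern n (int (card {0..n}) - int r - 1) (class_Q n Bs) \<sigma> t
          = (\<Sum>j\<in>{0..n} - Bb. \<Prod>i\<in>{0..n} - Bb - {j}. - t i)"
        using chern_Q[of n "int (card {0..n}) - int r - 1" Bs \<sigma> t] coeff_prod_sub[of "{0..n} - Bb" "\<lambda>i. - t i"] ne Bb_def
        by simp
      also have "\<dots> = (\<Sum>j\<in>{0..n} - Bb. (-1) ^ (n - r) * (\<Prod>i\<in>{0..n} - Bb - {j}. t i))"
      proof (rule sum.cong[OF refl])
        fix j assume j: "j \<in> {0..n} - Bb"
        have "card ({0..n} - Bb - {j}) = n - r" using cE j by simp
        thus "(\<Prod>i\<in>{0..n} - Bb - {j}. - t i) = (-1) ^ (n - r) * (\<Prod>i\<in>{0..n} - Bb - {j}. t i)"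
          using prod_neg_real[of "{0..n} - Bb - {j}" t] by simp
      qed
      finally show ?thesis .
    qed
    have "n + 1 - r = Suc (n - r)" using False rle by simp
    hence sg: "(-1::real) ^ (n - r) = - ((-1) ^ (n + 1 - r))" by simp
    have "(\<Prod>i\<in>Bb. t i) * (\<Sum>j\<in>{0..n} - Bb. (-1) ^ (n - r) * (\<Prod>i\<in>{0..n} - Bb - {j}. t i))
        = (-1) ^ (n - r) * (\<Sum>j\<in>{0..n} - Bb. \<Prod>i\<in>{0..n} - {j}. t i)"
      unfolding sum_distrib_left
    proof (rule sum.cong[OF refl])
      fix j assume j: "j \<in> {0..n} - Bb"
      have "{0..n} - {j} = Bb \<union> ({0..n} - Bb - {j})" using j B Bb_def by auto
      moreover have "Bb \<inter> ({0..n} - Bb - {j}) = {}" by auto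
      ultimately have "(\<Prod>i\<in>{0..n} - {j}. t i) = (\<Prod>i\<in>Bb. t i) * (\<Prod>i\<in>{0..n} - Bb - {j}. t i)"
        using fB by (simp add: prod.union_disjoint)
      thus "(\<Prod>i\<in>Bb. t i) * ((-1) ^ (n - r) * (\<Prod>i\<in>{0..n} - Bb - {j}. t i)) =
            (-1) ^ (n - r) * (\<Prod>i\<in>{0..n} - {j}. t i)" by simp
    qed
    then show ?thesis using c1 c2 sg Bb_def by simp
  qed
qed




lemma inv_perm_inj: "\<sigma> permutes S \<Longrightarrow> inj (inv \<sigma>)"
  using permutes_inj[OF permutes_inv] by blast

lemma indicator_rank:
  assumes M: "matroid {0..n} Bs" and s: "\<sigma> permutes {0..n}"
  shows "(if b \<in> lex_first_basis Bs \<sigma> then 1 else 0 :: real)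
       = real (mrank Bs (insert b {e. inv \<sigma> e < inv \<sigma> b})) - real (mrank Bs {e. inv \<sigma> e < inv \<sigma> b})"
proof -
  have inj: "inj (inv \<sigma>)" by (rule inv_perm_inj[OF s])
  define B where "B = lex_first_basis Bs \<sigma>"
  define P where "P = {e. inv \<sigma> e < inv \<sigma> b}"
  have fB: "finite B" using lex_first_basis_props(1)[OF M inj] M matroid_finite_basis B_def by blast
  have ins: "insert b P = {e. inv \<sigma> e < Suc (inv \<sigma> b)}"
    using inj unfolding P_def by (auto simp: less_Suc_eq dest: injD)
  have g1: "mrank Bs P = card (B \<inter> P)" unfolding P_def B_def by (rule greedy[OF M inj])
  have g2: "mrank Bs (insert b P) = card (B \<inter> insert b P)" unfolding ins B_def by (rule greedy[OF M inj])
  have bP: "b \<notin> P" unfolding P_def by simp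
  show ?thesis
  proof (cases "b \<in> B")
    case True
    hence "B \<inter> insert b P = insert b (B \<inter> P)" by auto
    hence "card (B \<inter> insert b P) = Suc (card (B \<inter> P))" using fB bP by simp
    then show ?thesis using g1 g2 True B_def P_def by simp
  next
    case False
    hence "B \<inter> insert b P = B \<inter> P" by auto
    then show ?thesis using g1 g2 False B_def P_def by simp
  qed
qed

lemma pre_list:
  assumes s: "\<sigma> permutes {0..n}" and b: "b \<in> {0..n}"
  shows "set (takeWhile (\<lambda>x. x \<noteq> b) (map \<sigma> [0..<Suc n])) = {e. inv \<sigma> e < inv \<sigma> b}"
proof -
  define k where "k = inv \<sigma> b"
  have kn: "k \<le> n" using permutes_in_image[OF permutes_inv[OF s], of b] b k_def by simp
  have sk: "\<sigma> k = b" using permutes_inverses(1)[OF s] k_def by simp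
  have "[0..<Suc n] = [0..<k] @ [k..<Suc n]" using kn
    by (metis le_SucI le_add_diff_inverse upt_add_eq_append zero_le)
  also have "[k..<Suc n] = k # [Suc k..<Suc n]" using kn by (simp add: upt_conv_Cons)
  finally have "map \<sigma> [0..<Suc n] = map \<sigma> [0..<k] @ b # map \<sigma> [Suc k..<Suc n]" using sk by simp
  moreover have "b \<notin> set (map \<sigma> [0..<k])"
  proof
    assume "b \<in> set (map \<sigma> [0..<k])"
    then obtain i where "i < k" "\<sigma> i = b" by auto
    hence "\<sigma> i = \<sigma> k" using sk by simp
    hence "i = k" using permutes_inj[OF s] by (auto dest: injD)
    thus False using \<open>i < k\<close> by simp
  qed
  ultimately have "takeWhile (\<lambda>x. x \<noteq> b) (map \<sigma> [0..<Suc n]) = map \<sigma> [0..<k]"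
    using take_drop_b(1) by metis
  moreover have "set (map \<sigma> [0..<k]) = {e. inv \<sigma> e < k}"
  proof (rule set_eqI, rule iffI)
    fix e assume "e \<in> set (map \<sigma> [0..<k])"
    then obtain i where "i < k" "e = \<sigma> i" by auto
    thus "e \<in> {e. inv \<sigma> e < k}" using permutes_inverses(2)[OF s] by simp
  next
    fix e assume "e \<in> {e. inv \<sigma> e < k}"
    hence "inv \<sigma> e < k" by simp
    moreover have "e = \<sigma> (inv \<sigma> e)" using permutes_inverses(1)[OF s] by simp
    ultimately show "e \<in> set (map \<sigma> [0..<k])" by (metis atLeastLessThan_iff image_eqI le0 set_map set_upt)
  qed
  ultimately show ?thesis using k_def by simp
qed

lemma sum_permutes_lists:
  "(\<Sum>\<sigma>\<in>{\<sigma>. \<sigma> permutes {0..n}}. H (map \<sigma> [0..<Suc n])) = (\<Sum>L\<in>permutations_of_set {0..n}. H L)"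
proof -
  define g where "g \<sigma> = map \<sigma> [0..<Suc n]" for \<sigma> :: "nat \<Rightarrow> nat"
  have inj: "inj_on g {\<sigma>. \<sigma> permutes {0..n}}"
  proof (rule inj_onI)
    fix \<sigma> \<tau> assume s: "\<sigma> \<in> {\<sigma>. \<sigma> permutes {0..n}}" "\<tau> \<in> {\<sigma>. \<sigma> permutes {0..n}}" and e: "g \<sigma> = g \<tau>"
    show "\<sigma> = \<tau>"
    proof
      fix x
      show "\<sigma> x = \<tau> x"
      proof (cases "x \<le> n")
        case True
        have "\<forall>y\<in>set [0..<Suc n]. \<sigma> y = \<tau> y" using e unfolding g_def by (simp only: map_eq_conv)
        moreover have "x \<in> set [0..<Suc n]" using True by (simp del: upt_Suc)
        ultimately show ?thesis by blast
      next
        case False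
        then show ?thesis using s permutes_not_in by (metis atLeastAtMost_iff mem_Collect_eq)
      qed
    qed
  qed
  have img: "g ` {\<sigma>. \<sigma> permutes {0..n}} = permutations_of_set {0..n}"
  proof (rule set_eqI, rule iffI)
    fix L assume "L \<in> g ` {\<sigma>. \<sigma> permutes {0..n}}"
    then obtain \<sigma> where s: "\<sigma> permutes {0..n}" "L = g \<sigma>" by auto
    have "set L = {0..n}" using s permutes_image[OF s(1)] unfolding g_def
      by (simp add: atLeastLessThanSuc_atLeastAtMost del: upt_Suc)
    moreover have "distinct L" using s permutes_inj[OF s(1)] unfolding g_def
      by (simp add: distinct_map del: upt_Suc) (meson inj_on_subset subset_UNIV)
    ultimately show "L \<in> permutations_of_set {0..n}" by blast
  next
    fix L assume L: "L \<in> permutations_of_set {0..n}"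
    have len: "length L = Suc n" using length_finite_permutations_of_set[OF L] by simp
    have d: "distinct L" "set L = {0..n}" using L by (auto dest: permutations_of_setD)
    define \<sigma> where "\<sigma> k = (if k \<le> n then L ! k else k)" for k
    have "bij_betw \<sigma> {0..n} {0..n}"
    proof (rule bij_betw_imageI)
      show "inj_on \<sigma> {0..n}"
        using d(1) len unfolding \<sigma>_def inj_on_def by (simp add: nth_eq_iff_index_eq)
      show "\<sigma> ` {0..n} = {0..n}"
      proof -
        have "\<sigma> ` {0..n} = (\<lambda>k. L ! k) ` {0..<length L}"
          using len unfolding \<sigma>_def by (auto simp: image_def less_Suc_eq_le)
        also have "\<dots> = set L" by (auto simp: set_conv_nth image_def)
        finally show ?thesis using d by simp
      qed
    qed
    hence s: "\<sigma> permutes {0..n}" by (rule bij_imp_permutes) (simp add: \<sigma>_def)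
    have "g \<sigma> = L" unfolding g_def using len
      by (intro nth_equalityI) (auto simp: \<sigma>_def nth_map simp del: upt_Suc)
    thus "L \<in> g ` {\<sigma>. \<sigma> permutes {0..n}}" using s by blast
  qed
  show ?thesis
    using sum.reindex[OF inj, of H] img unfolding g_def by (simp add: o_def)
qed

lemma Dl_perm: "Dl t (map \<sigma> [0..<Suc n]) = (\<Prod>i<n. (t (\<sigma> i) - t (\<sigma> (Suc i))))"
  unfolding Dl_nth by (rule prod.cong) (auto simp del: upt_Suc)

lemma alpha_real:
  assumes fE: "finite E" and b: "b \<in> E"
  shows "(\<Sum>P\<in>Pow (E - {b}). (-1) ^ card P * (real (mrank Bs (insert b P)) - real (mrank Bs P)))
       = - real_of_int (\<Sum>A\<in>Pow E. (-1) ^ card A * int (mrank Bs A))"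
proof -
  have E: "E = insert b (E - {b})" using b by auto
  have f: "finite (E - {b})" using fE by simp
  have "(\<Sum>A\<in>Pow E. (-1::real) ^ card A * real (mrank Bs A)) =
        (\<Sum>P\<in>Pow (E - {b}). (-1) ^ card P * real (mrank Bs P)) +
        (\<Sum>P\<in>Pow (E - {b}). (-1) ^ card (insert b P) * real (mrank Bs (insert b P)))"
    by (subst E, rule sum_Pow_insert[OF f]) simp
  also have "(\<Sum>P\<in>Pow (E - {b}). (-1::real) ^ card (insert b P) * real (mrank Bs (insert b P)))
      = (\<Sum>P\<in>Pow (E - {b}). - ((-1) ^ card P * real (mrank Bs (insert b P))))"
  proof (rule sum.cong[OF refl])
    fix P assume "P \<in> Pow (E - {b})"
    hence "card (insert b P) = Suc (card P)" using f by (meson PowD card_insert_disjoint finite_subset subset_Diff_insert)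
    thus "(-1::real) ^ card (insert b P) * real (mrank Bs (insert b P)) = - ((-1) ^ card P * real (mrank Bs (insert b P)))"
      by simp
  qed
  finally have "(\<Sum>A\<in>Pow E. (-1::real) ^ card A * real (mrank Bs A)) =
     - (\<Sum>P\<in>Pow (E - {b}). (-1) ^ card P * (real (mrank Bs (insert b P)) - real (mrank Bs P)))"
    by (simp add: sum_negf sum_subtractf right_diff_distrib)
  moreover have "real_of_int (\<Sum>A\<in>Pow E. (-1) ^ card A * int (mrank Bs A)) = (\<Sum>A\<in>Pow E. (-1::real) ^ card A * real (mrank Bs A))"
    by simp
  ultimately show ?thesis by simp
qed




lemma sum_Pow_sign_real:
  assumes "finite S"
  shows "(\<Sum>A\<in>Pow S. (-1::real) ^ card A) = (if S = {} then 1 else 0)"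
  using arg_cong[OF sum_Pow_sign[OF assms], of real_of_int] by simp

lemma loc_generic:
  fixes t :: "nat \<Rightarrow> real" and c u v :: real
  assumes M: "matroid {0..n} Bs" and inj: "inj_on t {0..n}"
    and hF: "\<And>\<sigma>. \<sigma> permutes {0..n} \<Longrightarrow> F \<sigma> t = c * (\<Sum>b\<in>{0..n}. (\<Prod>j\<in>{0..n} - {b}. t j) *
        (u + v * (real (mrank Bs (insert b {e. inv \<sigma> e < inv \<sigma> b})) - real (mrank Bs {e. inv \<sigma> e < inv \<sigma> b}))))"
  shows "loc_integral n F t = c * (u * (if n = 0 then 1 else 0)
      - v * real_of_int (\<Sum>A\<in>Pow {0..n}. (-1) ^ card A * int (mrank Bs A))) * (-1) ^ n"
proof -
  define E where "E = {0..n}"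
  define w where "w b = (\<Prod>j\<in>{0..n} - {b}. t j)" for b
  define dl where "dl b P = u + v * (real (mrank Bs (insert b P)) - real (mrank Bs P))" for b P
  define K where "K = u * (if n = 0 then 1 else 0) - v * real_of_int (\<Sum>A\<in>Pow {0..n}. (-1) ^ card A * int (mrank Bs A))"
  define H where "H L = c * (\<Sum>b\<in>E. w b * dl b (set (takeWhile (\<lambda>x. x \<noteq> b) L))) / Dl t L" for L
  have "loc_integral n F t = (\<Sum>\<sigma>\<in>{\<sigma>. \<sigma> permutes {0..n}}. H (map \<sigma> [0..<Suc n]))"
    unfolding loc_integral_def
  proof (rule sum.cong[OF refl])
    fix \<sigma> assume "\<sigma> \<in> {\<sigma>. \<sigma> permutes {0..n}}"
    hence s: "\<sigma> permutes {0..n}" by simp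
    have "F \<sigma> t = c * (\<Sum>b\<in>E. w b * dl b (set (takeWhile (\<lambda>x. x \<noteq> b) (map \<sigma> [0..<Suc n]))))"
      unfolding hF[OF s] E_def w_def dl_def
      by (intro arg_cong[where f = "\<lambda>x. c * x"] sum.cong refl) (simp add: pre_list[OF s] del: upt_Suc)
    thus "F \<sigma> t / (\<Prod>i<n. t (\<sigma> i) - t (\<sigma> (Suc i))) = H (map \<sigma> [0..<Suc n])"
      unfolding H_def Dl_perm by simp
  qed
  also have "\<dots> = (\<Sum>L\<in>permutations_of_set E. H L)" unfolding E_def by (rule sum_permutes_lists)
  also have "\<dots> = c * (\<Sum>b\<in>E. w b * (\<Sum>L\<in>permutations_of_set E. dl b (set (takeWhile (\<lambda>x. x \<noteq> b) L)) / Dl t L))"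
    unfolding H_def
    by (simp add: sum_divide_distrib sum_distrib_left sum_distrib_right mult.assoc sum.swap[of _ "permutations_of_set E"])
  also have "\<dots> = c * (\<Sum>b\<in>E. w b * (K / (\<Prod>j\<in>E - {b}. (t b - t j))))"
  proof -
    have "(\<Sum>L\<in>permutations_of_set E. dl b (set (takeWhile (\<lambda>x. x \<noteq> b) L)) / Dl t L) = K / (\<Prod>j\<in>E - {b}. (t b - t j))"
      if b: "b \<in> E" for b
    proof -
      have fE: "finite E" unfolding E_def by simp
      have "(\<Sum>L\<in>permutations_of_set E. dl b (set (takeWhile (\<lambda>x. x \<noteq> b) L)) / Dl t L)
         = (\<Sum>P\<in>Pow (E - {b}). (-1) ^ card P * dl b P) / (\<Prod>j\<in>E - {b}. (t b - t j))"
        by (rule sum_split_pre[OF fE b]) (use inj E_def in simp)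
      also have "(\<Sum>P\<in>Pow (E - {b}). (-1) ^ card P * dl b P) = K"
      proof -
        have "(\<Sum>P\<in>Pow (E - {b}). (-1) ^ card P * dl b P) =
              u * (\<Sum>P\<in>Pow (E - {b}). (-1::real) ^ card P) +
              v * (\<Sum>P\<in>Pow (E - {b}). (-1) ^ card P * (real (mrank Bs (insert b P)) - real (mrank Bs P)))"
        proof -
          have "(\<Sum>P\<in>Pow (E - {b}). (-1) ^ card P * dl b P) = (\<Sum>P\<in>Pow (E - {b}). u * (-1) ^ card P +
              v * ((-1) ^ card P * (real (mrank Bs (insert b P)) - real (mrank Bs P))))"
            by (rule sum.cong[OF refl]) (simp add: dl_def algebra_simps)
          thus ?thesis by (simp only: sum.distrib sum_distrib_left)
        qed
        also have "(\<Sum>P\<in>Pow (E - {b}). (-1::real) ^ card P) = (if n = 0 then 1 else 0)"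
        proof -
          have "E - {b} = {} \<longleftrightarrow> n = 0"
          proof
            assume h: "E - {b} = {}"
            have "0 \<in> E" "n \<in> E" unfolding E_def by auto
            hence "0 = b" "n = b" using h by blast+
            thus "n = 0" by simp
          next
            assume "n = 0" thus "E - {b} = {}" using b E_def by auto
          qed
          thus ?thesis using sum_Pow_sign_real[of "E - {b}"] fE by simp
        qed
        also have "(\<Sum>P\<in>Pow (E - {b}). (-1) ^ card P * (real (mrank Bs (insert b P)) - real (mrank Bs P)))
            = - real_of_int (\<Sum>A\<in>Pow E. (-1) ^ card A * int (mrank Bs A))"
          by (rule alpha_real[OF fE b])
        finally show ?thesis unfolding K_def E_def by simp
      qed
      finally show ?thesis .
    qed
    thus ?thesis by simp
  qed
  also have "\<dots> = c * K * (\<Sum>b\<in>E. w b / (\<Prod>j\<in>E - {b}. (t b - t j)))"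
    by (simp add: sum_distrib_left algebra_simps)
  also have "(\<Sum>b\<in>E. w b / (\<Prod>j\<in>E - {b}. (t b - t j))) = (-1) ^ n"
  proof -
    have "(\<Sum>b\<in>E. w b / (\<Prod>j\<in>E - {b}. (t b - t j))) = (-1) ^ (card E - 1)"
      unfolding w_def E_def by (rule lagrangeW) (use inj in auto)
    thus ?thesis unfolding E_def by simp
  qed
  finally show ?thesis unfolding K_def by simp
qed




theorem theorem6p2:
  fixes n r :: nat and \<B> :: "nat set set"
  assumes "matroid {0..n} \<B>"
    and "mrank \<B> {0..n} = r"
  shows "XE_integral_eq n
           (\<lambda>\<sigma> t. chern n (int r - 1) (Kdual (class_S n \<B>)) \<sigma> t
                  * chern n (int (card {0..n}) - int r) (class_Q n \<B>) \<sigma> t)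
           (real_of_int (beta {0..n} \<B>))
       \<and> XE_integral_eq n
           (\<lambda>\<sigma> t. chern n (int r) (Kdual (class_S n \<B>)) \<sigma> t
                  * chern n (int (card {0..n}) - int r - 1) (class_Q n \<B>) \<sigma> t)
           (real_of_int (beta {0..n} (dual_matroid {0..n} \<B>)))"
proof -
  note M = assms(1)
  have fE: "finite {0..n}" "{0..n} \<noteq> {}" by auto
  have fBs: "finite \<B>" "\<B> \<noteq> {}" "\<forall>B\<in>\<B>. B \<subseteq> {0..n}"
    using M matroid_finite_Bs unfolding matroid_def by auto
  have rle: "r \<le> n + 1" using mrank_le_card[OF fBs(1,2) fE(1)] assms(2) by simp
  have lfb: "lex_first_basis \<B> \<sigma> \<subseteq> {0..n}" "card (lex_first_basis \<B> \<sigma>) = r"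
    "finite (lex_first_basis \<B> \<sigma>)" if s: "\<sigma> permutes {0..n}" for \<sigma>
  proof -
    have "lex_first_basis \<B> \<sigma> \<in> \<B>" by (rule lex_first_basis_props(1)[OF M inv_perm_inj[OF s]])
    thus sub: "lex_first_basis \<B> \<sigma> \<subseteq> {0..n}" "card (lex_first_basis \<B> \<sigma>) = r"
      using fBs basis_card_rank[OF M] assms(2) by auto
    show "finite (lex_first_basis \<B> \<sigma>)" using sub(1) finite_subset by blast
  qed
  define R where "R = (\<Sum>A\<in>Pow {0..n}. (-1) ^ card A * int (mrank \<B> A))"
  define Z :: real where "Z = (if n = 0 then 1 else 0)"
  have beta1: "beta {0..n} \<B> = (-1) ^ r * R"
    unfolding R_def assms(2)[symmetric] by (rule beta_crapo[OF fE fBs])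
  have beta2: "real_of_int (beta {0..n} (dual_matroid {0..n} \<B>)) = real_of_int (beta {0..n} \<B>) - (-1) ^ (n + 1 - r) * Z"
  proof -
    have E: "{0..n} = insert 0 {1..n}" "0 \<notin> {1..n}" by auto
    have "beta {0..n} (dual_matroid {0..n} \<B>) = beta {0..n} \<B> - (-1) ^ (card {0..n} - mrank \<B> {0..n}) * (if {1..n} = {} then 1 else 0)"
      by (rule beta_dual[OF M E])
    moreover have "({1..n} = {}) = (n = 0)" by auto
    ultimately show ?thesis unfolding Z_def using assms(2) by simp
  qed
  have sa: "(-1::real) ^ (n + 1 - r) = - ((-1) ^ n * (-1) ^ r)"
  proof -
    have "(-1::real) ^ (n + 1 - r) * (-1) ^ r = (-1) ^ (n + 1)"
      using rle by (simp flip: power_add)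
    hence "(-1::real) ^ (n + 1 - r) * (-1) ^ r * (-1) ^ r = (-1) ^ (n + 1) * (-1) ^ r" by simp
    moreover have "(-1::real) ^ r * (-1) ^ r = 1" by (simp flip: power_add)
    ultimately show ?thesis by (simp add: mult.assoc)
  qed
  have ind: "(\<Sum>b\<in>lex_first_basis \<B> \<sigma>. g b) = (\<Sum>b\<in>{0..n}. g b *
      (real (mrank \<B> (insert b {e. inv \<sigma> e < inv \<sigma> b})) - real (mrank \<B> {e. inv \<sigma> e < inv \<sigma> b})))"
    if s: "\<sigma> permutes {0..n}" for \<sigma> and g :: "nat \<Rightarrow> real"
  proof -
    have "(\<Sum>b\<in>{0..n}. g b * (real (mrank \<B> (insert b {e. inv \<sigma> e < inv \<sigma> b})) - real (mrank \<B> {e. inv \<sigma> e < inv \<sigma> b})))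
        = (\<Sum>b\<in>{0..n}. if b \<in> lex_first_basis \<B> \<sigma> then g b else 0)"
      by (rule sum.cong[OF refl]) (simp add: indicator_rank[OF M s, symmetric])
    also have "\<dots> = (\<Sum>b\<in>{0..n} \<inter> lex_first_basis \<B> \<sigma>. g b)" by (simp add: sum.inter_restrict)
    also have "{0..n} \<inter> lex_first_basis \<B> \<sigma> = lex_first_basis \<B> \<sigma>" using lfb[OF s] by auto
    finally show ?thesis by simp
  qed
  have part1: "XE_integral_eq n
           (\<lambda>\<sigma> t. chern n (int r - 1) (Kdual (class_S n \<B>)) \<sigma> t
                  * chern n (int (card {0..n}) - int r) (class_Q n \<B>) \<sigma> t)
           (real_of_int (beta {0..n} \<B>))"
    unfolding XE_integral_eq_def
  proof (intro allI impI)
    fix t :: "nat \<Rightarrow> real" assume inj: "inj_on t {0..n}"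
    have "loc_integral n (\<lambda>\<sigma> t. chern n (int r - 1) (Kdual (class_S n \<B>)) \<sigma> t
                  * chern n (int (card {0..n}) - int r) (class_Q n \<B>) \<sigma> t) t
        = (-1) ^ (n + 1 - r) * (0 * (if n = 0 then 1 else 0) - 1 * real_of_int R) * (-1) ^ n"
      unfolding R_def
    proof (rule loc_generic[OF M inj])
      fix \<sigma> :: "nat \<Rightarrow> nat" assume s: "\<sigma> permutes {0..n}"
      show "chern n (int r - 1) (Kdual (class_S n \<B>)) \<sigma> t * chern n (int (card {0..n}) - int r) (class_Q n \<B>) \<sigma> t =
         (-1) ^ (n + 1 - r) * (\<Sum>b\<in>{0..n}. (\<Prod>j\<in>{0..n} - {b}. t j) *
        (0 + 1 * (real (mrank \<B> (insert b {e. inv \<sigma> e < inv \<sigma> b})) - real (mrank \<B> {e. inv \<sigma> e < inv \<sigma> b}))))"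
        using f1_formula[OF lfb(1,2)[OF s], of t] ind[OF s, of "\<lambda>b. \<Prod>j\<in>{0..n} - {b}. t j"] by simp
    qed
    also have "\<dots> = real_of_int (beta {0..n} \<B>)"
      unfolding beta1 using sa
      by (cases "even n"; cases "even r") (simp_all add: minus_one_power_iff)
    finally show "loc_integral n (\<lambda>\<sigma> t. chern n (int r - 1) (Kdual (class_S n \<B>)) \<sigma> t
                  * chern n (int (card {0..n}) - int r) (class_Q n \<B>) \<sigma> t) t = real_of_int (beta {0..n} \<B>)" .
  qed
  have part2: "XE_integral_eq n
           (\<lambda>\<sigma> t. chern n (int r) (Kdual (class_S n \<B>)) \<sigma> t
                  * chern n (int (card {0..n}) - int r - 1) (class_Q n \<B>) \<sigma> t)
           (real_of_int (beta {0..n} (dual_matroid {0..n} \<B>)))"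
    unfolding XE_integral_eq_def
  proof (intro allI impI)
    fix t :: "nat \<Rightarrow> real" assume inj: "inj_on t {0..n}"
    have "loc_integral n (\<lambda>\<sigma> t. chern n (int r) (Kdual (class_S n \<B>)) \<sigma> t
                  * chern n (int (card {0..n}) - int r - 1) (class_Q n \<B>) \<sigma> t) t
        = (- ((-1) ^ (n + 1 - r))) * (1 * (if n = 0 then 1 else 0) - (-1) * real_of_int R) * (-1) ^ n"
      unfolding R_def
    proof (rule loc_generic[OF M inj])
      fix \<sigma> :: "nat \<Rightarrow> nat" assume s: "\<sigma> permutes {0..n}"
      have "(\<Sum>j\<in>{0..n} - lex_first_basis \<B> \<sigma>. \<Prod>i\<in>{0..n} - {j}. t i)
          = (\<Sum>j\<in>{0..n}. \<Prod>i\<in>{0..n} - {j}. t i) - (\<Sum>j\<in>lex_first_basis \<B> \<sigma>. \<Prod>i\<in>{0..n} - {j}. t i)"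
        using lfb[OF s] by (simp add: sum_diff)
      also have "\<dots> = (\<Sum>b\<in>{0..n}. (\<Prod>j\<in>{0..n} - {b}. t j) *
        (1 + (-1) * (real (mrank \<B> (insert b {e. inv \<sigma> e < inv \<sigma> b})) - real (mrank \<B> {e. inv \<sigma> e < inv \<sigma> b}))))"
        unfolding ind[OF s] by (simp add: sum_subtractf sum.distrib algebra_simps)
      finally show "chern n (int r) (Kdual (class_S n \<B>)) \<sigma> t * chern n (int (card {0..n}) - int r - 1) (class_Q n \<B>) \<sigma> t =
         (- ((-1) ^ (n + 1 - r))) * (\<Sum>b\<in>{0..n}. (\<Prod>j\<in>{0..n} - {b}. t j) *
        (1 + (-1) * (real (mrank \<B> (insert b {e. inv \<sigma> e < inv \<sigma> b})) - real (mrank \<B> {e. inv \<sigma> e < inv \<sigma> b}))))"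
        using f2_formula[OF lfb(1,2)[OF s], of t] by simp
    qed
    also have "\<dots> = real_of_int (beta {0..n} (dual_matroid {0..n} \<B>))"
      unfolding beta2 beta1 Z_def using sa
      by (cases "n = 0"; cases "even n"; cases "even r") (simp_all add: minus_one_power_iff)
    finally show "loc_integral n (\<lambda>\<sigma> t. chern n (int r) (Kdual (class_S n \<B>)) \<sigma> t
                  * chern n (int (card {0..n}) - int r - 1) (class_Q n \<B>) \<sigma> t) t =
        real_of_int (beta {0..n} (dual_matroid {0..n} \<B>))" .
  qed
  show ?thesis using part1 part2 by blast
qed


end
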